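(* Let $\lambda = (\lambda_1, \dots , \lambda_r)$ be a partition of $n$ with $\lambda_1\ge 1$, and let $\alpha = (\lambda_2,\dots,\lambda_r)$. Then $$f_{\lambda, n-\lambda_1}(q) = q^{\binom{n-\lambda_1+1}{2}}\, s_{\alpha^\prime}(1,q,\dots,q^{\lambda_1-1}),$$ where $\alpha'$ is the conjugate of $\alpha$. Equivalently, $$f_{\lambda, n-\lambda_1}(q) = q^{\binom{n-\lambda_1+1}{2}} \det\left( \begin{bmatrix} \lambda_1 \\ \lambda_i-i+j \end{bmatrix}_q q^{\binom{\lambda_i-i+j}{2}} \right)_{2 \leq i,j \leq r}.$$
   Context: For a partition $\lambda\vdash N$, a standard Young tableau of shape $\lambda$ is a filling of the Ferrers diagram with $1,\dots,N$, increasing along rows and down columns; it has a descent at $m$ if $m+1$ lies in a strictly lower row than $m$; $\mathrm{des}$ is the number of descents and $\mathrm{maj}$ their sum. $f_{\lambda,i}(q)=\sum q^{\mathrm{maj}(\tau)}$ over standard Young tableaux of shape $\lambda$ with $\mathrm{des}(\tau)=i$. (Note $n-\lambda_1$ is the maximum possible number of descents for shape $\lambda\vdash n$.) The conjugate $\alpha'$ of a partition $\alpha$ has $\alpha'_c$ equal to the number of parts of $\alpha$ that are $\ge c$. $s_\beta(x_1,\dots,x_m)=\sum_T x^T$ is the Schur polynomial, the sum over semistandard Young tableaux $T$ of shape $\beta$ with entries in $\{1,\dots,m\}$ (rows weakly increasing, columns strictly increasing), $x^T=\prod_a x_a^{\#\{a \text{ in } T\}}$. The $q$-binomial coefficient is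 $\frac{(q)_M}{(q)_N(q)_{M-N}}$ for integers $0\le N\le M$ and $0$ otherwise; $\binom{m}{2}=m(m-1)/2$ for all integers $m$. *)

theory Defs
  imports "HOL-Combinatorics.Permutations" "HOL-Computational_Algebra.Polynomial"
begin

text \<open>Partitions are lists of positive integers in weakly decreasing order;
  part number i (1-based) is lam ! (i-1).\<close>
definition is_partition :: "nat list \<Rightarrow> bool" where
  "is_partition lam \<longleftrightarrow> sorted (rev lam) \<and> 0 \<notin> set lam"

text \<open>Ferrers diagram: cells (row, column), 0-indexed.\<close>
definition cells :: "nat list \<Rightarrow> (nat \<times> nat) set" where
  "cells lam = {(i, j). i < length lam \<and> j < lam ! i}"

definition conj_part :: "nat list \<Rightarrow> nat list" where
  "conj_part xs = map (\<lambda>c. length (filter (\<lambda>x. c \<le> x) xs))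
      [1..<Suc (if xs = [] then 0 else Max (set xs))]"

definition syt :: "nat list \<Rightarrow> (nat \<times> nat \<Rightarrow> nat) set" where
  "syt lam = {T. bij_betw T (cells lam) {1..sum_list lam}
      \<and> (\<forall>c. c \<notin> cells lam \<longrightarrow> T c = 0)
      \<and> (\<forall>i j. (i, Suc j) \<in> cells lam \<longrightarrow> T (i, j) < T (i, Suc j))
      \<and> (\<forall>i j. (Suc i, j) \<in> cells lam \<longrightarrow> T (i, j) < T (Suc i, j))}"

definition row_of :: "nat list \<Rightarrow> (nat \<times> nat \<Rightarrow> nat) \<Rightarrow> nat \<Rightarrow> nat" where
  "row_of lam T m = fst (THE c. c \<in> cells lam \<and> T c = m)"

definition descents :: "nat list \<Rightarrow> (nat \<times> nat \<Rightarrow> nat) \<Rightarrow> nat set" where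
  "descents lam T = {m. 1 \<le> m \<and> m < sum_list lam \<and> row_of lam T m < row_of lam T (Suc m)}"

definition des :: "nat list \<Rightarrow> (nat \<times> nat \<Rightarrow> nat) \<Rightarrow> nat" where
  "des lam T = card (descents lam T)"

definition maj :: "nat list \<Rightarrow> (nat \<times> nat \<Rightarrow> nat) \<Rightarrow> nat" where
  "maj lam T = \<Sum> (descents lam T)"

definition fpoly :: "nat list \<Rightarrow> nat \<Rightarrow> rat poly" where
  "fpoly lam i = (\<Sum>T \<in> {T \<in> syt lam. des lam T = i}. monom 1 (maj lam T))"

definition ssyt :: "nat list \<Rightarrow> nat \<Rightarrow> (nat \<times> nat \<Rightarrow> nat) set" where
  "ssyt beta m = {T. (\<forall>c \<in> cells beta. T c \<in> {1..m})
      \<and> (\<forall>c. c \<notin> cells beta \<longrightarrow> T c = 0)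
      \<and> (\<forall>i j. (i, Suc j) \<in> cells beta \<longrightarrow> T (i, j) \<le> T (i, Suc j))
      \<and> (\<forall>i j. (Suc i, j) \<in> cells beta \<longrightarrow> T (i, j) < T (Suc i, j))}"

definition schur :: "nat list \<Rightarrow> nat \<Rightarrow> (nat \<Rightarrow> 'a::comm_ring_1) \<Rightarrow> 'a" where
  "schur beta m x = (\<Sum>T \<in> ssyt beta m. \<Prod>c \<in> cells beta. x (T c))"

definition qpoch :: "nat \<Rightarrow> rat poly" where
  "qpoch M = (\<Prod>k = 1..M. 1 - monom 1 k)"

definition qbinom :: "int \<Rightarrow> int \<Rightarrow> rat poly" where
  "qbinom M N = (if 0 \<le> N \<and> N \<le> M
     then qpoch (nat M) div (qpoch (nat N) * qpoch (nat (M - N))) else 0)"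

definition binom2 :: "int \<Rightarrow> nat" where
  "binom2 m = nat (m * (m - 1) div 2)"

end

theory Submission
  imports Defs
begin

fun gb :: "nat \<Rightarrow> nat \<Rightarrow> rat poly" where
  "gb m 0 = 1"
| "gb 0 (Suc k) = 0"
| "gb (Suc m) (Suc k) = gb m (Suc k) + monom 1 (m - k) * gb m k"

lemma gb_zero: "m < k \<Longrightarrow> gb m k = 0"
proof (induction m arbitrary: k)
  case 0 then show ?case by (cases k) auto
next
  case (Suc m) then show ?case by (cases k) auto
qed

lemma qpoch_Suc: "qpoch (Suc j) = qpoch j * (1 - monom 1 (Suc j))"
  unfolding qpoch_def by (simp add: prod.atLeast1_atMost_eq prod.cl_ivl_Suc)

lemma qpoch_0: "qpoch 0 = 1" unfolding qpoch_def by simp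

lemma qpoch_nz: "qpoch j \<noteq> 0"
proof -
  have "1 - monom (1::rat) k \<noteq> 0" if "k \<ge> 1" for k
  proof
    assume "1 - monom (1::rat) k = 0"
    then have "coeff (1 - monom (1::rat) k) 0 = 0" by simp
    with that show False by (simp add: coeff_monom)
  qed
  then show ?thesis unfolding qpoch_def by (subst prod_zero_iff) auto
qed

lemma gb_qpoch: "k \<le> m \<Longrightarrow> gb m k * qpoch k * qpoch (m - k) = qpoch m"
proof (induction m arbitrary: k)
  case 0 then show ?case by (simp add: qpoch_0)
next
  case (Suc m)
  show ?case
  proof (cases k)
    case 0 then show ?thesis by (simp add: qpoch_0)
  next
    case (Suc k')
    have k': "k' \<le> m" using Suc.prems Suc by simp
    have first: "gb m (Suc k') * qpoch (Suc k') * qpoch (m - k') = qpoch m * (1 - monom 1 (m - k'))"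
    proof (cases "k' = m")
      case True then show ?thesis by (simp add: gb_zero)
    next
      case False
      then have "Suc k' \<le> m" using k' by simp
      then have IH: "gb m (Suc k') * qpoch (Suc k') * qpoch (m - Suc k') = qpoch m" using Suc.IH by blast
      have "m - k' = Suc (m - Suc k')" using \<open>Suc k' \<le> m\<close> by simp
      then have "qpoch (m - k') = qpoch (m - Suc k') * (1 - monom 1 (m - k'))"
        by (simp add: qpoch_Suc)
      then have "gb m (Suc k') * qpoch (Suc k') * qpoch (m - k') = (gb m (Suc k') * qpoch (Suc k') * qpoch (m - Suc k')) * (1 - monom 1 (m - k'))"
        by (simp only: mult.assoc)
      then show ?thesis using IH by simp
    qed
    have second: "gb m k' * qpoch k' * qpoch (m - k') = qpoch m" using Suc.IH k' by blast
    have "gb (Suc m) k * qpoch k * qpoch (Suc m - k)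
        = gb m (Suc k') * qpoch (Suc k') * qpoch (m - k')
          + monom 1 (m - k') * (gb m k' * qpoch k' * qpoch (m - k')) * (1 - monom 1 (Suc k'))"
      using Suc by (simp add: qpoch_Suc algebra_simps)
    also have "\<dots> = qpoch m * (1 - monom 1 (m - k')) + monom 1 (m - k') * qpoch m * (1 - monom 1 (Suc k'))"
      using first second by simp
    also have "\<dots> = qpoch m * (1 - monom 1 (Suc m))"
    proof -
      have "monom (1::rat) (m - k') * monom 1 (Suc k') = monom 1 (Suc m)"
        using k' by (simp add: mult_monom)
      then show ?thesis by (simp add: algebra_simps)
    qed
    also have "\<dots> = qpoch (Suc m)" by (simp add: qpoch_Suc)
    finally show ?thesis .
  qed
qed

lemma qbinom_gb: "qbinom (int m) k = (if k < 0 then 0 else gb m (nat k))"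
proof (cases "0 \<le> k \<and> k \<le> int m")
  case True
  then have "nat k \<le> m" using nat_mono[of k "int m"] by simp
  have eq: "nat (int m - k) = m - nat k" using True by (simp add: nat_diff_distrib)
  have "qpoch m div (qpoch (nat k) * qpoch (m - nat k)) = gb m (nat k)"
    using gb_qpoch[OF \<open>nat k \<le> m\<close>] qpoch_nz
    by (metis mult.assoc nonzero_mult_div_cancel_right mult_eq_0_iff)
  then show ?thesis using True eq unfolding qbinom_def by simp
next
  case False
  then show ?thesis unfolding qbinom_def by (auto simp: gb_zero)
qed

definition E :: "nat \<Rightarrow> int \<Rightarrow> rat poly" where
  "E m k = qbinom (int m) k * monom 1 (binom2 k)"

lemma binom2_Suc: "binom2 (int (Suc k)) = binom2 (int k) + k"
proof -
  have "int (Suc k) * (int (Suc k) - 1) = int k * (int k - 1) + 2 * int k" by (simp add: algebra_simps)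
  then have "int (Suc k) * (int (Suc k) - 1) div 2 = int k * (int k - 1) div 2 + int k" by simp
  moreover have "int k * (int k - 1) div 2 \<ge> 0"
    by (cases k) (auto simp: pos_imp_zdiv_nonneg_iff)
  ultimately show ?thesis unfolding binom2_def by simp
qed

lemma E_neg: "k < 0 \<Longrightarrow> E m k = 0" by (simp add: E_def qbinom_gb)

lemma E_0: "E m 0 = (1::rat poly)" by (simp add: E_def qbinom_gb binom2_def)

lemma E_Suc: "E (Suc m) k = E m k + monom 1 m * E m (k - 1)"
proof (cases "k \<le> 0")
  case True
  then show ?thesis by (cases "k = 0") (auto simp: E_0 E_neg)
next
  case False
  define k' where "k' = nat k - 1"
  have k: "k = int (Suc k')" using False unfolding k'_def by simp
  have k1: "k - 1 = int k'" using k by simp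
  have A: "E (Suc m) k = (gb m (Suc k') + monom 1 (m - k') * gb m k') * monom 1 (binom2 (int k') + k')"
    unfolding k E_def qbinom_gb binom2_Suc nat_int by simp
  have B: "E m k + monom 1 m * E m (k - 1) = gb m (Suc k') * monom 1 (binom2 (int k') + k') + monom 1 m * (gb m k' * monom 1 (binom2 (int k')))"
    unfolding k1 unfolding k E_def qbinom_gb binom2_Suc nat_int by simp
  show ?thesis
  proof (cases "k' \<le> m")
    case True
    have "monom (1::rat) (m - k') * monom 1 (binom2 (int k') + k') = monom 1 m * monom 1 (binom2 (int k'))"
      using True by (simp add: mult_monom)
    then show ?thesis unfolding A B by (simp add: algebra_simps)
  next
    case False
    then show ?thesis unfolding A B by (simp add: gb_zero)
  qed
qed

definition D :: "nat \<Rightarrow> (nat \<Rightarrow> int) \<Rightarrow> nat \<Rightarrow> rat poly" where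
  "D r b m = (\<Sum>p | p permutes {2..r}. of_int (sign p) *
      (\<Prod>i\<in>{2..r}. E m (b i - int i + int (p i))))"

lemma finite_perms: "finite {p. p permutes {2..(r::nat)}}"
  by (rule finite_permutations) simp

lemma D_cong: "(\<And>i. i \<in> {2..r} \<Longrightarrow> b i = b' i) \<Longrightarrow> D r b m = D r b' m"
  unfolding D_def by (intro sum.cong refl arg_cong2[where f="(*)"] prod.cong) auto

lemma D_Suc: "D r b (Suc m) = (\<Sum>R\<in>Pow {2..r}. monom 1 (m * card R) *
     D r (\<lambda>i. b i - (if i \<in> R then 1 else 0)) m)"
proof -
  let ?I = "{2..r}"
  have prod_eq: "(\<Prod>i\<in>?I. E (Suc m) (b i - int i + int (p i))) =
     (\<Sum>R\<in>Pow ?I. monom 1 (m * card R) *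
        (\<Prod>i\<in>?I. E m ((b i - (if i \<in> R then 1 else 0)) - int i + int (p i))))" for p
  proof -
    have "(\<Prod>i\<in>?I. E (Suc m) (b i - int i + int (p i))) =
        (\<Prod>i\<in>?I. monom 1 m * E m (b i - int i + int (p i) - 1) + E m (b i - int i + int (p i)))"
      by (intro prod.cong refl) (simp add: E_Suc)
    also have "\<dots> = (\<Sum>R\<in>Pow ?I. (\<Prod>i\<in>R. monom 1 m * E m (b i - int i + int (p i) - 1)) *
                 (\<Prod>i\<in>?I - R. E m (b i - int i + int (p i))))"
      by (rule prod_add) simp
    also have "\<dots> = (\<Sum>R\<in>Pow ?I. monom 1 (m * card R) *
        (\<Prod>i\<in>?I. E m ((b i - (if i \<in> R then 1 else 0)) - int i + int (p i))))"
    proof (intro sum.cong refl)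
      fix R assume R: "R \<in> Pow ?I"
      have fin: "finite R" using R finite_subset by auto
      have "(\<Prod>i\<in>R. monom 1 m * E m (b i - int i + int (p i) - 1)) =
          monom 1 (m * card R) * (\<Prod>i\<in>R. E m (b i - int i + int (p i) - 1))"
        by (simp add: prod.distrib monom_power mult.commute)
      moreover have "(\<Prod>i\<in>?I. E m ((b i - (if i \<in> R then 1 else 0)) - int i + int (p i))) =
          (\<Prod>i\<in>?I - R. E m ((b i - (if i \<in> R then 1 else 0)) - int i + int (p i))) *
          (\<Prod>i\<in>R. E m ((b i - (if i \<in> R then 1 else 0)) - int i + int (p i)))"
        using R by (intro prod.subset_diff) auto
      moreover have "(\<Prod>i\<in>?I - R. E m ((b i - (if i \<in> R then 1 else 0)) - int i + int (p i))) =
           (\<Prod>i\<in>?I - R. E m (b i - int i + int (p i)))"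
        by (intro prod.cong) auto
      moreover have "(\<Prod>i\<in>R. E m ((b i - (if i \<in> R then 1 else 0)) - int i + int (p i))) =
           (\<Prod>i\<in>R. E m (b i - int i + int (p i) - 1))"
        by (intro prod.cong refl arg_cong[where f="E m"]) auto
      ultimately show "(\<Prod>i\<in>R. monom 1 m * E m (b i - int i + int (p i) - 1)) *
                 (\<Prod>i\<in>?I - R. E m (b i - int i + int (p i))) =
           monom 1 (m * card R) *
        (\<Prod>i\<in>?I. E m ((b i - (if i \<in> R then 1 else 0)) - int i + int (p i)))"
        by (simp add: algebra_simps)
    qed
    finally show ?thesis .
  qed
  have "D r b (Suc m) = (\<Sum>p | p permutes ?I. \<Sum>R\<in>Pow ?I. of_int (sign p) * (monom 1 (m * card R) *
        (\<Prod>i\<in>?I. E m ((b i - (if i \<in> R then 1 else 0)) - int i + int (p i)))))"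
    unfolding D_def prod_eq by (simp add: sum_distrib_left)
  also have "\<dots> = (\<Sum>R\<in>Pow ?I. \<Sum>p | p permutes ?I. monom 1 (m * card R) * (of_int (sign p) *
        (\<Prod>i\<in>?I. E m ((b i - (if i \<in> R then 1 else 0)) - int i + int (p i)))))"
    by (subst sum.swap) (simp add: algebra_simps)
  also have "\<dots> = (\<Sum>R\<in>Pow {2..r}. monom 1 (m * card R) *
     D r (\<lambda>i. b i - (if i \<in> R then 1 else 0)) m)"
    unfolding D_def by (simp add: sum_distrib_left)
  finally show ?thesis .
qed

lemma D_eq_rows:
  assumes i: "i \<in> {2..r}" and j: "j \<in> {2..r}" and ij: "i \<noteq> j"
    and eq: "b i - int i = b j - int j"
  shows "D r b m = 0"
proof -
  let ?I = "{2..r}"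
  let ?t = "Transposition.transpose i j"
  define f where "f p = of_int (sign p) * (\<Prod>k\<in>?I. E m (b k - int k + int (p k)))" for p
  have tp: "?t permutes ?I" using i j by (rule permutes_swap_id)
  have st: "sign ?t = -1" using ij by (simp add: sign_swap_id)
  have key: "f (p \<circ> ?t) = - f p" if p: "p permutes ?I" for p
  proof -
    have "(\<Prod>k\<in>?I. E m (b k - int k + int ((p \<circ> ?t) k))) =
        (\<Prod>k\<in>?I. E m (b (?t k) - int (?t k) + int (p (?t k))))"
    proof (intro prod.cong refl)
      fix k assume "k \<in> ?I"
      show "E m (b k - int k + int ((p \<circ> ?t) k)) = E m (b (?t k) - int (?t k) + int (p (?t k)))"
        using eq by (cases "k = i"; cases "k = j") (auto simp: transpose_def)
    qed
    also have "\<dots> = (\<Prod>k\<in>?I. E m (b k - int k + int (p k)))"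
      using prod.reindex_bij_betw[OF permutes_imp_bij[OF tp], of "\<lambda>k. E m (b k - int k + int (p k))"]
      by simp
    finally have "(\<Prod>k\<in>?I. E m (b k - int k + int ((p \<circ> ?t) k))) = (\<Prod>k\<in>?I. E m (b k - int k + int (p k)))" .
    moreover have "sign (p \<circ> ?t) = - sign p"
      using sign_compose[OF permutation_permutes[THEN iffD2] permutation_permutes[THEN iffD2]] st p tp
      by (metis finite_atLeastAtMost mult_minus1_right)
    ultimately show ?thesis unfolding f_def by simp
  qed
  have bij: "bij_betw (\<lambda>p. p \<circ> ?t) {p. p permutes ?I} {p. p permutes ?I}"
  proof (rule bij_betw_byWitness[where f'="\<lambda>p. p \<circ> ?t"])
    show "\<forall>a\<in>{p. p permutes ?I}. a \<circ> ?t \<circ> ?t = a" by (simp add: comp_assoc)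
    show "\<forall>a\<in>{p. p permutes ?I}. a \<circ> ?t \<circ> ?t = a" by (simp add: comp_assoc)
    show "(\<lambda>p. p \<circ> ?t) ` {p. p permutes ?I} \<subseteq> {p. p permutes ?I}"
      using tp by (auto intro: permutes_compose)
    show "(\<lambda>p. p \<circ> ?t) ` {p. p permutes ?I} \<subseteq> {p. p permutes ?I}"
      using tp by (auto intro: permutes_compose)
  qed
  have "D r b m = sum f {p. p permutes ?I}" unfolding D_def f_def by simp
  also have "\<dots> = sum (\<lambda>p. f (p \<circ> ?t)) {p. p permutes ?I}"
    using sum.reindex_bij_betw[OF bij, of f] by simp
  also have "\<dots> = - sum f {p. p permutes ?I}"
    using key by (simp add: sum_negf)
  finally have "D r b m = - D r b m" using \<open>D r b m = sum f {p. p permutes ?I}\<close> by simp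
  then show ?thesis by simp
qed

lemma D_last_neg:
  assumes "2 \<le> r" and "b r < 0"
  shows "D r b m = 0"
proof -
  have Z: "(\<Prod>i\<in>{2..r}. E m (b i - int i + int (p i))) = 0" if p: "p permutes {2..r}" for p
  proof -
    have "p r \<in> {2..r}" using p assms(1) permutes_in_image by fastforce
    then have "E m (b r - int r + int (p r)) = 0" using assms(2) by (intro E_neg) auto
    then show ?thesis using assms(1) by (intro prod_zero) auto
  qed
  show ?thesis unfolding D_def using Z by (intro sum.neutral) auto
qed

lemma E_zero_m: "E 0 k = (if k = 0 then 1 else 0)"
proof -
  have q0: "qbinom 0 k = (if k < 0 then 0 else gb 0 (nat k))" using qbinom_gb[of 0 k] by simp
  show ?thesis by (auto simp: E_def q0 gb_zero binom2_def)
qed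

lemma D_base:
  assumes mono: "\<And>i. i \<in> {2..r} \<Longrightarrow> b i \<le> b 2" and nn: "\<And>i. i \<in> {2..r} \<Longrightarrow> 0 \<le> b i"
  shows "D r b 0 = (if \<forall>i\<in>{2..r}. b i = 0 then 1 else 0)"
proof (cases "\<forall>i\<in>{2..r}. b i = 0")
  case True
  have "of_int (sign p) * (\<Prod>i\<in>{2..r}. E 0 (b i - int i + int (p i))) = (if p = id then 1 else 0)"
    if p: "p permutes {2..r}" for p
  proof (cases "p = id")
    case True
    with \<open>\<forall>i\<in>{2..r}. b i = 0\<close> show ?thesis by (simp add: E_zero_m sign_id)
  next
    case False
    then obtain i where "p i \<noteq> i" by (metis eq_id_iff)
    then have i: "i \<in> {2..r}" using p by (meson permutes_not_in)
    have "E 0 (b i - int i + int (p i)) = 0" using True i \<open>p i \<noteq> i\<close> by (simp add: E_zero_m)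
    then have "(\<Prod>i\<in>{2..r}. E 0 (b i - int i + int (p i))) = 0" using i by (intro prod_zero) auto
    then show ?thesis using False by simp
  qed
  then have "D r b 0 = (\<Sum>p | p permutes {2..r}. if p = id then 1 else 0)"
    unfolding D_def by (intro sum.cong) auto
  also have "\<dots> = 1" using finite_perms[of r] permutes_id[of "{2..r}"]
    by (simp add: sum.delta')
  finally show ?thesis using True by simp
next
  case False
  then obtain i where i: "i \<in> {2..r}" "b i \<noteq> 0" by auto
  then have b2: "b 2 > 0" using mono nn by (metis less_le_trans order_le_less)
  have r2: "2 \<in> {2..r}" using i by auto
  have Z: "(\<Prod>i\<in>{2..r}. E 0 (b i - int i + int (p i))) = 0" if p: "p permutes {2..r}" for p
  proof -
    have "p 2 \<in> {2..r}" using p r2 permutes_in_image by fastforce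
    then have "E 0 (b 2 - int 2 + int (p 2)) = 0" using b2 by (simp add: E_zero_m)
    then show ?thesis using r2 by (intro prod_zero) (auto intro!: bexI[of _ 2])
  qed
  have "D r b 0 = 0" unfolding D_def using Z by (intro sum.neutral) auto
  then show ?thesis using False by simp
qed

definition dec :: "nat list \<Rightarrow> nat set \<Rightarrow> nat list" where
  "dec lam A = map (\<lambda>i. lam ! i - (if i \<in> A then 1 else 0)) [0..<length lam]"

lemma length_dec[simp]: "length (dec lam A) = length lam" by (simp add: dec_def)
lemma nth_dec[simp]: "i < length lam \<Longrightarrow> dec lam A ! i = lam ! i - (if i \<in> A then 1 else 0)"
  by (simp add: dec_def)

definition plike1 :: "nat list \<Rightarrow> bool" where
  "plike1 lam \<longleftrightarrow> (\<forall>i. 1 \<le> i \<longrightarrow> Suc i < length lam \<longrightarrow> lam ! Suc i \<le> lam ! i)"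

definition cellsW :: "nat list \<Rightarrow> (nat \<times> nat) set" where
  "cellsW lam = {(i, j). 1 \<le> i \<and> i < length lam \<and> j < lam ! i}"

definition RT :: "nat list \<Rightarrow> nat \<Rightarrow> (nat \<times> nat \<Rightarrow> nat) set" where
  "RT lam m = {U. (\<forall>c\<in>cellsW lam. U c \<in> {1..m}) \<and> (\<forall>c. c \<notin> cellsW lam \<longrightarrow> U c = 0)
      \<and> (\<forall>i j. (i, Suc j) \<in> cellsW lam \<longrightarrow> U (i, j) < U (i, Suc j))
      \<and> (\<forall>i j. (Suc i, j) \<in> cellsW lam \<longrightarrow> 1 \<le> i \<longrightarrow> U (i, j) \<le> U (Suc i, j))}"

definition W :: "nat list \<Rightarrow> nat \<Rightarrow> rat poly" where
  "W lam m = (\<Sum>U\<in>RT lam m. \<Prod>c\<in>cellsW lam. monom 1 (U c - 1))"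

definition Vp :: "nat list \<Rightarrow> nat set set" where
  "Vp lam = {R. R \<subseteq> {1..<length lam} \<and> (\<forall>i\<in>R. 0 < lam ! i) \<and> plike1 (dec lam R)}"

lemma finite_cellsW: "finite (cellsW lam)"
proof -
  have "cellsW lam = (SIGMA i:{1..<length lam}. {..<lam!i})"
    unfolding cellsW_def by auto
  then show ?thesis by simp
qed

lemma finite_RT: "finite (RT lam m)"
proof -
  have "RT lam m \<subseteq> {f. \<forall>x. (x \<in> cellsW lam \<longrightarrow> f x \<in> {1..m}) \<and> (x \<notin> cellsW lam \<longrightarrow> f x = 0)}"
    unfolding RT_def by auto
  then show ?thesis by (rule finite_subset) (intro finite_set_of_finite_funs finite_cellsW; simp)
qed

lemma finite_Vp: "finite (Vp lam)"
  unfolding Vp_def by (rule finite_subset[of _ "Pow {1..<length lam}"]) auto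

lemma W_cong: "cellsW lam1 = cellsW lam2 \<Longrightarrow> W lam1 m = W lam2 m"
  unfolding W_def RT_def by simp

lemma RT_zero: "U \<in> RT lam m \<Longrightarrow> c \<notin> cellsW lam \<Longrightarrow> U c = 0"
  unfolding RT_def by blast

lemma RT_row_ge: "U \<in> RT lam m \<Longrightarrow> (i, j) \<in> cellsW lam \<Longrightarrow> Suc j \<le> U (i, j)"
proof (induction j)
  case 0 then show ?case unfolding RT_def by force
next
  case (Suc j)
  have "(i, j) \<in> cellsW lam" using Suc.prems(2) unfolding cellsW_def by auto
  then have "Suc j \<le> U (i, j)" using Suc by blast
  moreover have "U (i, j) < U (i, Suc j)" using Suc.prems unfolding RT_def by blast
  ultimately show ?case by simp
qed

lemma W_zero:
  assumes "Suc 0 < length lam" and "m < lam ! 1"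
  shows "W lam m = 0"
proof -
  have "RT lam m = {}"
  proof (rule ccontr)
    assume "RT lam m \<noteq> {}"
    then obtain U where U: "U \<in> RT lam m" by auto
    have c: "(1, lam ! 1 - 1) \<in> cellsW lam" using assms unfolding cellsW_def by auto
    have "lam ! 1 \<le> U (1, lam ! 1 - 1)" using RT_row_ge[OF U c] assms by simp
    moreover have "U (1, lam ! 1 - 1) \<le> m" using U c unfolding RT_def by auto
    ultimately show False using assms by simp
  qed
  then show ?thesis unfolding W_def by simp
qed

lemma W_base: "W lam 0 = (if cellsW lam = {} then 1 else 0)"
proof (cases "cellsW lam = {}")
  case True
  have "RT lam 0 = {\<lambda>_. 0}" unfolding RT_def True by auto
  then show ?thesis unfolding W_def using True by simp
next
  case False
  have "RT lam 0 = {}" using False unfolding RT_def by auto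
  then show ?thesis unfolding W_def using False by simp
qed

lemma cellsW_dec:
  assumes "R \<subseteq> {1..<length lam}" "\<forall>i\<in>R. 0 < lam ! i"
  shows "cellsW (dec lam R) = cellsW lam - (\<lambda>i. (i, lam ! i - 1)) ` R"
  using assms unfolding cellsW_def by (auto split: if_splits)

lemma last_cellsW:
  assumes "R \<subseteq> {1..<length lam}" "\<forall>i\<in>R. 0 < lam ! i"
  shows "(\<lambda>i. (i, lam ! i - 1)) ` R \<subseteq> cellsW lam"
  using assms unfolding cellsW_def by auto

context
  fixes lam :: "nat list" and m :: nat
  assumes pl: "plike1 lam"
begin

definition RU :: "(nat \<times> nat \<Rightarrow> nat) \<Rightarrow> nat set" where
  "RU U = {i \<in> {1..<length lam}. 0 < lam ! i \<and> U (i, lam ! i - 1) = Suc m}"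

definition restrW :: "nat set \<Rightarrow> (nat \<times> nat \<Rightarrow> nat) \<Rightarrow> (nat \<times> nat \<Rightarrow> nat)" where
  "restrW R U = (\<lambda>c. if c \<in> cellsW (dec lam R) then U c else 0)"

definition extW :: "nat set \<Rightarrow> (nat \<times> nat \<Rightarrow> nat) \<Rightarrow> (nat \<times> nat \<Rightarrow> nat)" where
  "extW R U = (\<lambda>c. if c \<in> cellsW (dec lam R) then U c else if c \<in> cellsW lam then Suc m else 0)"

lemma RU_sub: "RU U \<subseteq> {1..<length lam}" "\<forall>i\<in>RU U. 0 < lam ! i"
  unfolding RU_def by auto

lemma top_is_last:
  assumes U: "U \<in> RT lam (Suc m)" and c: "(i, j) \<in> cellsW lam" and v: "U (i, j) = Suc m"
  shows "j = lam ! i - 1"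
proof (rule ccontr)
  assume "j \<noteq> lam ! i - 1"
  then have c2: "(i, Suc j) \<in> cellsW lam" using c unfolding cellsW_def by auto
  then have "U (i, j) < U (i, Suc j)" using U unfolding RT_def by blast
  moreover have "U (i, Suc j) \<le> Suc m" using U c2 unfolding RT_def by auto
  ultimately show False using v by simp
qed

lemma RU_Vp: assumes U: "U \<in> RT lam (Suc m)" shows "RU U \<in> Vp lam"
proof -
  have "plike1 (dec lam (RU U))"
    unfolding plike1_def
  proof (intro allI impI)
    fix i assume i1: "1 \<le> i" and i2: "Suc i < length (dec lam (RU U))"
    have le: "lam ! Suc i \<le> lam ! i" using pl i1 i2 unfolding plike1_def by simp
    show "dec lam (RU U) ! Suc i \<le> dec lam (RU U) ! i"
    proof (rule ccontr)
      assume "\<not> ?thesis"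
      then have A: "lam ! Suc i = lam ! i" "i \<in> RU U" "Suc i \<notin> RU U" using i2 le
        by (auto split: if_splits)
      then have "U (i, lam ! i - 1) = Suc m" "0 < lam ! i" unfolding RU_def by auto
      have c2: "(Suc i, lam ! i - 1) \<in> cellsW lam" using A \<open>0 < lam ! i\<close> i2 unfolding cellsW_def by auto
      then have "U (i, lam ! i - 1) \<le> U (Suc i, lam ! i - 1)" using U i1 unfolding RT_def by blast
      moreover have "U (Suc i, lam ! i - 1) \<le> Suc m" using U c2 unfolding RT_def by auto
      ultimately have "U (Suc i, lam ! Suc i - 1) = Suc m" using \<open>U (i, lam ! i - 1) = Suc m\<close> A by simp
      then have "Suc i \<in> RU U" using i2 A \<open>0 < lam ! i\<close> unfolding RU_def by auto
      then show False using A by simp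
    qed
  qed
  then show ?thesis unfolding Vp_def using RU_sub by auto
qed

lemma restrW_RT: assumes U: "U \<in> RT lam (Suc m)" shows "restrW (RU U) U \<in> RT (dec lam (RU U)) m"
proof -
  let ?R = "RU U"
  have cd: "cellsW (dec lam ?R) = cellsW lam - (\<lambda>i. (i, lam ! i - 1)) ` ?R"
    by (rule cellsW_dec[OF RU_sub(1) RU_sub(2)])
  have vals: "U c \<in> {1..m}" if c: "c \<in> cellsW (dec lam ?R)" for c
  proof -
    obtain i j where cij: "c = (i, j)" by force
    have c1: "c \<in> cellsW lam" using c cd by auto
    then have "U c \<in> {1..Suc m}" using U unfolding RT_def by auto
    moreover have "U c \<noteq> Suc m"
    proof
      assume "U c = Suc m"
      then have "j = lam ! i - 1" using top_is_last[OF U] c1 cij by auto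
      moreover have "0 < lam ! i" "1 \<le> i" "i < length lam" using c1 cij unfolding cellsW_def by auto
      ultimately have "i \<in> ?R" using \<open>U c = Suc m\<close> cij unfolding RU_def by auto
      then show False using c cd cij \<open>j = lam ! i - 1\<close> by auto
    qed
    ultimately show ?thesis by auto
  qed
  show ?thesis unfolding RT_def
  proof (intro CollectI conjI allI impI ballI)
    fix c assume "c \<in> cellsW (dec lam ?R)" then show "restrW ?R U c \<in> {1..m}"
      using vals unfolding restrW_def by auto
  next
    fix c assume "c \<notin> cellsW (dec lam ?R)" then show "restrW ?R U c = 0" unfolding restrW_def by auto
  next
    fix i j assume a: "(i, Suc j) \<in> cellsW (dec lam ?R)"
    then have b: "(i, j) \<in> cellsW (dec lam ?R)" unfolding cellsW_def by auto
    have "(i, Suc j) \<in> cellsW lam" using a cd by auto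
    then have "U (i, j) < U (i, Suc j)" using U unfolding RT_def by blast
    then show "restrW ?R U (i, j) < restrW ?R U (i, Suc j)"
      using a b unfolding restrW_def by simp
  next
    fix i j assume a: "(Suc i, j) \<in> cellsW (dec lam ?R)" and i1: "1 \<le> i"
    have pd: "plike1 (dec lam ?R)" using RU_Vp[OF U] unfolding Vp_def by auto
    have a': "Suc i < length lam" "j < dec lam ?R ! Suc i" using a unfolding cellsW_def by auto
    have "dec lam ?R ! Suc i \<le> dec lam ?R ! i" using pd i1 a'(1) unfolding plike1_def by simp
    then have b: "(i, j) \<in> cellsW (dec lam ?R)" using a' i1 unfolding cellsW_def by simp
    have "(Suc i, j) \<in> cellsW lam" using a cd by auto
    then have "U (i, j) \<le> U (Suc i, j)" using U i1 unfolding RT_def by blast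
    then show "restrW ?R U (i, j) \<le> restrW ?R U (Suc i, j)"
      using a b unfolding restrW_def by simp
  qed
qed

lemma extW_restrW: assumes U: "U \<in> RT lam (Suc m)" shows "extW (RU U) (restrW (RU U) U) = U"
proof
  fix c
  let ?R = "RU U"
  have cd: "cellsW (dec lam ?R) = cellsW lam - (\<lambda>i. (i, lam ! i - 1)) ` ?R"
    by (rule cellsW_dec[OF RU_sub(1) RU_sub(2)])
  show "extW ?R (restrW ?R U) c = U c"
  proof (cases "c \<in> cellsW (dec lam ?R)")
    case True then show ?thesis unfolding extW_def restrW_def by simp
  next
    case False
    show ?thesis
    proof (cases "c \<in> cellsW lam")
      case True
      then obtain i where "i \<in> ?R" "c = (i, lam ! i - 1)" using False cd by auto
      then show ?thesis using False True unfolding extW_def RU_def by auto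
    next
      case False
      then show ?thesis using RT_zero[OF U False] \<open>c \<notin> cellsW (dec lam ?R)\<close> unfolding extW_def by auto
    qed
  qed
qed

lemma extW_props:
  assumes R: "R \<in> Vp lam" and U': "U' \<in> RT (dec lam R) m"
  shows "extW R U' \<in> RT lam (Suc m)" "RU (extW R U') = R" "restrW R (extW R U') = U'"
proof -
  have Rs: "R \<subseteq> {1..<length lam}" "\<forall>i\<in>R. 0 < lam ! i" "plike1 (dec lam R)" using R unfolding Vp_def by auto
  have cd: "cellsW (dec lam R) = cellsW lam - (\<lambda>i. (i, lam ! i - 1)) ` R"
    by (rule cellsW_dec[OF Rs(1) Rs(2)])
  have lc: "(\<lambda>i. (i, lam ! i - 1)) ` R \<subseteq> cellsW lam" by (rule last_cellsW[OF Rs(1) Rs(2)])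
  let ?U = "extW R U'"
  have old: "?U c = U' c" if "c \<in> cellsW (dec lam R)" for c using that unfolding extW_def by simp
  have new: "?U c = Suc m" if "c \<in> cellsW lam" "c \<notin> cellsW (dec lam R)" for c
    using that unfolding extW_def by simp
  have U'v: "U' c \<in> {1..m}" if "c \<in> cellsW (dec lam R)" for c using U' that unfolding RT_def by auto
  show "?U \<in> RT lam (Suc m)" unfolding RT_def
  proof (intro CollectI conjI allI impI ballI)
    fix c assume "c \<in> cellsW lam" then show "?U c \<in> {1..Suc m}"
      using U'v unfolding extW_def by fastforce
  next
    fix c assume "c \<notin> cellsW lam" then show "?U c = 0" using cd unfolding extW_def by auto
  next
    fix i j assume a: "(i, Suc j) \<in> cellsW lam"
    have ij: "(i, j) \<in> cellsW lam" using a unfolding cellsW_def by auto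
    show "?U (i, j) < ?U (i, Suc j)"
    proof (cases "(i, Suc j) \<in> cellsW (dec lam R)")
      case True
      then have "(i, j) \<in> cellsW (dec lam R)" unfolding cellsW_def by auto
      then show ?thesis using True U' unfolding extW_def RT_def by auto
    next
      case False
      have "(i, j) \<in> cellsW (dec lam R)"
      proof (rule ccontr)
        assume "(i, j) \<notin> cellsW (dec lam R)"
        then have "j = lam ! i - 1" using ij cd by auto
        then show False using a unfolding cellsW_def by auto
      qed
      then show ?thesis using False a U'v[of "(i,j)"] unfolding extW_def by auto
    qed
  next
    fix i j assume a: "(Suc i, j) \<in> cellsW lam" and i1: "1 \<le> i"
    have ij: "(i, j) \<in> cellsW lam" using a i1 pl unfolding cellsW_def plike1_def
      by auto
    show "?U (i, j) \<le> ?U (Suc i, j)"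
    proof (cases "(i, j) \<in> cellsW (dec lam R)")
      case True
      show ?thesis
      proof (cases "(Suc i, j) \<in> cellsW (dec lam R)")
        case True
        then show ?thesis using \<open>(i, j) \<in> cellsW (dec lam R)\<close> U' i1 unfolding extW_def RT_def by auto
      next
        case False
        then show ?thesis using \<open>(i, j) \<in> cellsW (dec lam R)\<close> U'v[of "(i,j)"] a unfolding extW_def by auto
      qed
    next
      case False
      then obtain jj where iR: "i \<in> R" and jj: "j = lam ! i - 1" using ij cd by auto
      have ltl: "Suc i < length lam" using a unfolding cellsW_def by auto
      have le1: "lam ! Suc i \<le> lam ! i" using pl i1 ltl unfolding plike1_def by simp
      have le2: "j < lam ! Suc i" using a unfolding cellsW_def by simp
      have "0 < lam ! i" using Rs(2) iR by simp
      then have eqlen: "lam ! Suc i = lam ! i" using le1 le2 jj by linarith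
      have "Suc i \<in> R"
      proof (rule ccontr)
        assume "Suc i \<notin> R"
        then have "dec lam R ! Suc i = lam ! i" "dec lam R ! i = lam ! i - 1" using iR eqlen ltl by auto
        moreover have "dec lam R ! Suc i \<le> dec lam R ! i" using Rs(3) i1 ltl unfolding plike1_def by simp
        ultimately show False using Rs(2) iR by auto
      qed
      then have "(Suc i, j) \<notin> cellsW (dec lam R)" using cd jj eqlen by auto
      then show ?thesis using new[OF a] new[OF ij False] by simp
    qed
  qed
  show "RU ?U = R"
  proof
    show "RU ?U \<subseteq> R"
    proof
      fix i assume "i \<in> RU ?U"
      then have i: "i \<in> {1..<length lam}" "0 < lam ! i" "?U (i, lam ! i - 1) = Suc m" unfolding RU_def by auto
      show "i \<in> R"
      proof (rule ccontr)
        assume "i \<notin> R"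
        then have "(i, lam ! i - 1) \<in> cellsW (dec lam R)" using i unfolding cellsW_def by auto
        then show False using i U'v old by fastforce
      qed
    qed
    show "R \<subseteq> RU ?U"
    proof
      fix i assume iR: "i \<in> R"
      then have "(i, lam ! i - 1) \<in> cellsW lam" "(i, lam ! i - 1) \<notin> cellsW (dec lam R)" using lc cd by auto
      then show "i \<in> RU ?U" using new iR Rs unfolding RU_def by auto
    qed
  qed
  show "restrW R ?U = U'"
  proof
    fix c show "restrW R ?U c = U' c" using RT_zero[OF U', of c] unfolding restrW_def extW_def by auto
  qed
qed

lemma weight_split:
  assumes U: "U \<in> RT lam (Suc m)"
  shows "(\<Prod>c\<in>cellsW lam. monom (1::rat) (U c - 1)) =
    monom 1 (m * card (RU U)) * (\<Prod>c\<in>cellsW (dec lam (RU U)). monom 1 (restrW (RU U) U c - 1))"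
proof -
  let ?R = "RU U"
  let ?L = "(\<lambda>i. (i, lam ! i - 1)) ` ?R"
  have cd: "cellsW (dec lam ?R) = cellsW lam - ?L" by (rule cellsW_dec[OF RU_sub(1) RU_sub(2)])
  have lc: "?L \<subseteq> cellsW lam" by (rule last_cellsW[OF RU_sub(1) RU_sub(2)])
  have "cellsW lam = cellsW (dec lam ?R) \<union> ?L" using cd lc by auto
  then have "(\<Prod>c\<in>cellsW lam. monom (1::rat) (U c - 1)) =
      (\<Prod>c\<in>cellsW (dec lam ?R). monom (1::rat) (U c - 1)) * (\<Prod>c\<in>?L. monom (1::rat) (U c - 1))"
  proof -
    have f1: "finite (cellsW (dec lam ?R))" by (rule finite_cellsW)
    have f2: "finite ?L" using RU_sub(1) finite_subset[of ?R "{1..<length lam}"] by auto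
    have dj: "cellsW (dec lam ?R) \<inter> ?L = {}" using cd by auto
    assume "cellsW lam = cellsW (dec lam ?R) \<union> ?L"
    then show ?thesis using prod.union_disjoint[OF f1 f2 dj] by simp
  qed
  moreover have "(\<Prod>c\<in>cellsW (dec lam ?R). monom (1::rat) (U c - 1)) =
      (\<Prod>c\<in>cellsW (dec lam ?R). monom 1 (restrW ?R U c - 1))"
    unfolding restrW_def by (intro prod.cong) auto
  moreover have "(\<Prod>c\<in>?L. monom (1::rat) (U c - 1)) = monom 1 (m * card ?R)"
  proof -
    have "(\<Prod>c\<in>?L. monom (1::rat) (U c - 1)) = (\<Prod>c\<in>?L. monom (1::rat) m)"
      unfolding RU_def by (intro prod.cong) auto
    also have "\<dots> = monom 1 m ^ card ?L" by simp
    also have "card ?L = card ?R" by (rule card_image) (auto simp: inj_on_def)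
    finally show ?thesis by (simp add: monom_power mult.commute)
  qed
  ultimately show ?thesis by (simp add: mult.commute)
qed

lemma W_Suc: "W lam (Suc m) = (\<Sum>R\<in>Vp lam. monom 1 (m * card R) * W (dec lam R) m)"
proof -
  have "W lam (Suc m) = (\<Sum>R\<in>Vp lam. \<Sum>U\<in>{U \<in> RT lam (Suc m). RU U = R}. \<Prod>c\<in>cellsW lam. monom 1 (U c - 1))"
    unfolding W_def by (rule sum.group[symmetric]) (auto simp: finite_RT finite_Vp RU_Vp)
  also have "\<dots> = (\<Sum>R\<in>Vp lam. monom 1 (m * card R) * W (dec lam R) m)"
  proof (intro sum.cong refl)
    fix R assume R: "R \<in> Vp lam"
    have bij: "bij_betw (restrW R) {U \<in> RT lam (Suc m). RU U = R} (RT (dec lam R) m)"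
    proof (rule bij_betw_byWitness[where f'="extW R"])
      show "\<forall>a\<in>{U \<in> RT lam (Suc m). RU U = R}. extW R (restrW R a) = a"
        using extW_restrW by auto
      show "\<forall>a'\<in>RT (dec lam R) m. restrW R (extW R a') = a'" using extW_props R by blast
      show "restrW R ` {U \<in> RT lam (Suc m). RU U = R} \<subseteq> RT (dec lam R) m"
        using restrW_RT by auto
      show "extW R ` RT (dec lam R) m \<subseteq> {U \<in> RT lam (Suc m). RU U = R}"
        using extW_props R by blast
    qed
    have "(\<Sum>U\<in>{U \<in> RT lam (Suc m). RU U = R}. \<Prod>c\<in>cellsW lam. monom (1::rat) (U c - 1)) =
        (\<Sum>U\<in>{U \<in> RT lam (Suc m). RU U = R}. monom 1 (m * card R) *
            (\<Prod>c\<in>cellsW (dec lam R). monom 1 (restrW R U c - 1)))"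
    proof (intro sum.cong refl)
      fix U assume "U \<in> {U \<in> RT lam (Suc m). RU U = R}"
      then show "(\<Prod>c\<in>cellsW lam. monom (1::rat) (U c - 1)) = monom 1 (m * card R) *
            (\<Prod>c\<in>cellsW (dec lam R). monom 1 (restrW R U c - 1))"
        using weight_split[of U] by auto
    qed
    also have "\<dots> = monom 1 (m * card R) * (\<Sum>U\<in>{U \<in> RT lam (Suc m). RU U = R}.
            (\<Prod>c\<in>cellsW (dec lam R). monom 1 (restrW R U c - 1)))"
      by (simp only: sum_distrib_left)
    also have "\<dots> = monom 1 (m * card R) * (\<Sum>U'\<in>RT (dec lam R) m. \<Prod>c\<in>cellsW (dec lam R). monom 1 (U' c - 1))"
    proof -
      have ri: "(\<Sum>U\<in>{U \<in> RT lam (Suc m). RU U = R}.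
            (\<Prod>c\<in>cellsW (dec lam R). monom (1::rat) (restrW R U c - 1))) =
          (\<Sum>U'\<in>RT (dec lam R) m. \<Prod>c\<in>cellsW (dec lam R). monom 1 (U' c - 1))"
        using sum.reindex_bij_betw[OF bij, of "\<lambda>U'. \<Prod>c\<in>cellsW (dec lam R). monom (1::rat) (U' c - 1)"]
        by simp
      show ?thesis by (simp only: ri)
    qed
    finally show "(\<Sum>U\<in>{U \<in> RT lam (Suc m). RU U = R}. \<Prod>c\<in>cellsW lam. monom (1::rat) (U c - 1)) =
        monom 1 (m * card R) * W (dec lam R) m" unfolding W_def .
  qed
  finally show ?thesis .
qed

end

definition bvec :: "nat list \<Rightarrow> nat \<Rightarrow> int" where
  "bvec lam = (\<lambda>i. int (lam ! (i - 1)))"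

lemma plike1_mono: "plike1 lam \<Longrightarrow> 1 \<le> i \<Longrightarrow> i \<le> j \<Longrightarrow> j < length lam \<Longrightarrow> lam ! j \<le> lam ! i"
proof (induction j)
  case 0 then show ?case by simp
next
  case (Suc j)
  show ?case
  proof (cases "i = Suc j")
    case True then show ?thesis by simp
  next
    case False
    then have "lam ! j \<le> lam ! i" using Suc by simp
    moreover have "lam ! Suc j \<le> lam ! j" using Suc.prems False unfolding plike1_def by simp
    ultimately show ?thesis by simp
  qed
qed

lemma int_chain:
  fixes c :: "nat \<Rightarrow> int"
  assumes "\<And>k. i \<le> k \<Longrightarrow> k < r \<Longrightarrow> c (Suc k) \<le> c k"
  shows "i \<le> j \<Longrightarrow> j \<le> r \<Longrightarrow> c j \<le> c i"
proof (induction j)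
  case 0 then show ?case by simp
next
  case (Suc j)
  show ?case
  proof (cases "i = Suc j")
    case True then show ?thesis by simp
  next
    case False
    then have "c j \<le> c i" using Suc by simp
    moreover have "c (Suc j) \<le> c j" using Suc.prems False assms by simp
    ultimately show ?thesis by simp
  qed
qed

lemma D_zero_notVp:
  assumes pl: "plike1 lam" and R: "R \<subseteq> {1..<length lam}" and nR: "R \<notin> Vp lam"
  shows "D (length lam) (\<lambda>i. int (lam ! (i - 1)) - (if i - 1 \<in> R then 1 else 0)) m = 0"
proof -
  let ?r = "length lam"
  define c where "c = (\<lambda>i. int (lam ! (i - 1)) - (if i - 1 \<in> R then 1 else 0))"
  show ?thesis unfolding c_def[symmetric]
  proof (cases "\<exists>i. 2 \<le> i \<and> i < ?r \<and> c i < c (Suc i)")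
    case True
    then obtain i where i: "2 \<le> i" "i < ?r" "c i < c (Suc i)" by auto
    have le: "lam ! i \<le> lam ! (i - 1)" using plike1_mono[OF pl, of "i - 1" i] i by simp
    have "c i - int i = c (Suc i) - int (Suc i)"
      using i(3) le unfolding c_def by (auto split: if_splits)
    then show "D ?r c m = 0" using i by (intro D_eq_rows[of i _ "Suc i"]) auto
  next
    case False
    then have mono: "\<And>k. 2 \<le> k \<Longrightarrow> k < ?r \<Longrightarrow> c (Suc k) \<le> c k" by (meson not_less)
    show "D ?r c m = 0"
    proof (cases "\<exists>i\<in>{2..?r}. c i < 0")
      case True
      then obtain i where i: "i \<in> {2..?r}" "c i < 0" by auto
      have h: "\<And>k. i \<le> k \<Longrightarrow> k < ?r \<Longrightarrow> c (Suc k) \<le> c k" using mono i(1) by auto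
      have "c ?r \<le> c i" using int_chain[of i ?r c, OF h, of ?r] i(1) by auto
      then show ?thesis using i by (intro D_last_neg) auto
    next
      case False
      have F: "\<And>k. k \<in> {2..?r} \<Longrightarrow> 0 \<le> c k" using False by (meson not_less)
      have "R \<in> Vp lam"
        unfolding Vp_def
      proof (intro CollectI conjI ballI R)
        fix i assume iR: "i \<in> R"
        then have "Suc i \<in> {2..?r}" using R by auto
        then have "\<not> c (Suc i) < 0" using False by blast
        then have "c (Suc i) \<ge> 0" by simp
        then show "0 < lam ! i" using iR unfolding c_def by auto
      next
        show "plike1 (dec lam R)" unfolding plike1_def
        proof (intro allI impI)
          fix i assume "1 \<le> i" "Suc i < length (dec lam R)"
          then have "c (Suc (Suc i)) \<le> c (Suc i)" using mono[of "Suc i"] by simp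
          moreover have "c (Suc i) \<ge> 0" "c (Suc (Suc i)) \<ge> 0" using F \<open>Suc i < length (dec lam R)\<close> \<open>1 \<le> i\<close> by auto
          ultimately show "dec lam R ! Suc i \<le> dec lam R ! i" using \<open>Suc i < length (dec lam R)\<close>
            unfolding c_def by (auto split: if_splits)
        qed
      qed
      then show ?thesis using nR by simp
    qed
  qed
qed

theorem W_eq_D: "plike1 lam \<Longrightarrow> W lam m = D (length lam) (bvec lam) m"
proof (induction m arbitrary: lam)
  case 0
  let ?r = "length lam"
  have mono: "bvec lam i \<le> bvec lam 2" if "i \<in> {2..?r}" for i
    using plike1_mono[OF 0, of 1 "i - 1"] that unfolding bvec_def by auto
  have "D ?r (bvec lam) 0 = (if \<forall>i\<in>{2..?r}. bvec lam i = 0 then 1 else 0)"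
    by (rule D_base[of ?r "bvec lam", OF mono]) (auto simp: bvec_def)
  moreover have "(cellsW lam = {}) = (\<forall>i\<in>{2..?r}. bvec lam i = 0)"
  proof
    assume "cellsW lam = {}"
    show "\<forall>i\<in>{2..?r}. bvec lam i = 0"
    proof
      fix i assume i: "i \<in> {2..?r}"
      show "bvec lam i = 0"
      proof (rule ccontr)
        assume "bvec lam i \<noteq> 0"
        then have "(i - 1, 0) \<in> cellsW lam" using i unfolding bvec_def cellsW_def by auto
        then show False using \<open>cellsW lam = {}\<close> by simp
      qed
    qed
  next
    assume a: "\<forall>i\<in>{2..?r}. bvec lam i = 0"
    show "cellsW lam = {}"
    proof (rule ccontr)
      assume "cellsW lam \<noteq> {}"
      then obtain i j where "1 \<le> i" "i < ?r" "j < lam ! i" unfolding cellsW_def by auto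
      then have "Suc i \<in> {2..?r}" "lam ! i \<noteq> 0" by auto
      then show False using a unfolding bvec_def by fastforce
    qed
  qed
  ultimately show ?case by (simp add: W_base)
next
  case (Suc m)
  let ?r = "length lam"
  have "W lam (Suc m) = (\<Sum>R\<in>Vp lam. monom 1 (m * card R) * W (dec lam R) m)"
    by (rule W_Suc[OF Suc.prems])
  also have "\<dots> = (\<Sum>R\<in>Vp lam. monom 1 (m * card R) * D ?r (bvec (dec lam R)) m)"
    using Suc.IH unfolding Vp_def by auto
  also have "\<dots> = (\<Sum>R\<in>Pow {1..<?r}. monom 1 (m * card R) *
        D ?r (\<lambda>i. int (lam ! (i - 1)) - (if i - 1 \<in> R then 1 else 0)) m)"
  proof (rule sum.mono_neutral_cong_left)
    show "finite (Pow {1..<?r})" by simp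
    show "Vp lam \<subseteq> Pow {1..<?r}" unfolding Vp_def by auto
    show "\<forall>R\<in>Pow {1..<?r} - Vp lam. monom 1 (m * card R) *
        D ?r (\<lambda>i. int (lam ! (i - 1)) - (if i - 1 \<in> R then 1 else 0)) m = 0"
      using D_zero_notVp[OF Suc.prems] by auto
    show "monom 1 (m * card R) * D ?r (bvec (dec lam R)) m =
       monom 1 (m * card R) * D ?r (\<lambda>i. int (lam ! (i - 1)) - (if i - 1 \<in> R then 1 else 0)) m"
      if R: "R \<in> Vp lam" for R
    proof -
      have "D ?r (bvec (dec lam R)) m = D ?r (\<lambda>i. int (lam ! (i - 1)) - (if i - 1 \<in> R then 1 else 0)) m"
      proof (rule D_cong)
        fix i assume i: "i \<in> {2..?r}"
        have "i - 1 \<in> R \<Longrightarrow> 0 < lam ! (i - 1)" using R unfolding Vp_def by auto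
        then show "bvec (dec lam R) i = int (lam ! (i - 1)) - (if i - 1 \<in> R then 1 else 0)"
          using i unfolding bvec_def by (auto simp: of_nat_diff)
      qed
      then show ?thesis by simp
    qed
  qed
  also have "\<dots> = (\<Sum>S\<in>Pow {2..?r}. monom 1 (m * card S) *
        D ?r (\<lambda>i. bvec lam i - (if i \<in> S then 1 else 0)) m)"
  proof -
    have bij: "bij_betw (\<lambda>R. Suc ` R) (Pow {1..<?r}) (Pow {2..?r})"
    proof (rule bij_betw_byWitness[where f'="\<lambda>S. (\<lambda>i. i - 1) ` S"])
      show "\<forall>a\<in>Pow {1..<?r}. (\<lambda>i. i - 1) ` Suc ` a = a" by (auto simp: image_image)
      show "\<forall>a'\<in>Pow {2..?r}. Suc ` (\<lambda>i. i - 1) ` a' = a'"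
      proof
        fix S assume "S \<in> Pow {2..?r}"
        then have "\<forall>i\<in>S. Suc (i - 1) = i" by auto
        then show "Suc ` (\<lambda>i. i - 1) ` S = S" by (simp add: image_image)
      qed
      show "(\<lambda>R. Suc ` R) ` Pow {1..<?r} \<subseteq> Pow {2..?r}" by auto
      show "(\<lambda>S. (\<lambda>i. i - 1) ` S) ` Pow {2..?r} \<subseteq> Pow {1..<?r}" by force
    qed
    have "(\<Sum>S\<in>Pow {2..?r}. monom 1 (m * card S) * D ?r (\<lambda>i. bvec lam i - (if i \<in> S then 1 else 0)) m)
       = (\<Sum>R\<in>Pow {1..<?r}. monom 1 (m * card (Suc ` R)) * D ?r (\<lambda>i. bvec lam i - (if i \<in> Suc ` R then 1 else 0)) m)"
      using sum.reindex_bij_betw[OF bij, of "\<lambda>S. monom 1 (m * card S) * D ?r (\<lambda>i. bvec lam i - (if i \<in> S then 1 else 0)) m"]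
      by simp
    also have "\<dots> = (\<Sum>R\<in>Pow {1..<?r}. monom 1 (m * card R) *
        D ?r (\<lambda>i. int (lam ! (i - 1)) - (if i - 1 \<in> R then 1 else 0)) m)"
    proof (intro sum.cong refl)
      fix R assume "R \<in> Pow {1..<?r}"
      have "card (Suc ` R) = card R" by (simp add: card_image)
      moreover have "D ?r (\<lambda>i. bvec lam i - (if i \<in> Suc ` R then 1 else 0)) m =
          D ?r (\<lambda>i. int (lam ! (i - 1)) - (if i - 1 \<in> R then 1 else 0)) m"
      proof (rule D_cong)
        fix i assume "i \<in> {2..?r}"
        then have "(i \<in> Suc ` R) = (i - 1 \<in> R)" by (cases i) (auto simp: inj_image_mem_iff)
        then show "bvec lam i - (if i \<in> Suc ` R then 1 else 0) = int (lam ! (i - 1)) - (if i - 1 \<in> R then 1 else 0)"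
          unfolding bvec_def by simp
      qed
      ultimately show "monom 1 (m * card (Suc ` R)) * D ?r (\<lambda>i. bvec lam i - (if i \<in> Suc ` R then 1 else 0)) m =
         monom 1 (m * card R) * D ?r (\<lambda>i. int (lam ! (i - 1)) - (if i - 1 \<in> R then 1 else 0)) m" by simp
    qed
    finally show ?thesis by simp
  qed
  also have "\<dots> = D ?r (bvec lam) (Suc m)" by (rule D_Suc[symmetric])
  finally show ?case .
qed

lemma filt_len:
  "sorted_wrt (\<lambda>x y. y \<le> x) (xs::nat list) \<Longrightarrow>
    (k < length (filter (\<lambda>x. v \<le> x) xs)) = (k < length xs \<and> v \<le> xs ! k)"
proof (induction xs arbitrary: k)
  case Nil then show ?case by simp
next
  case (Cons a xs)
  have sx: "sorted_wrt (\<lambda>x y. y \<le> x) xs" and ge: "\<forall>y\<in>set xs. y \<le> a" using Cons.prems by auto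
  show ?case
  proof (cases "v \<le> a")
    case True
    then show ?thesis using Cons.IH[OF sx] by (cases k) auto
  next
    case False
    have "\<forall>x\<in>set xs. \<not> v \<le> x"
    proof
      fix x assume "x \<in> set xs"
      then have "x \<le> a" using ge by simp
      then show "\<not> v \<le> x" using False by simp
    qed
    then have "filter (\<lambda>x. v \<le> x) xs = []" by (simp add: filter_empty_conv)
    moreover have "\<not> v \<le> (a # xs) ! k" if "k < length (a # xs)" for k
      using False ge that by (cases k) (auto, meson le_trans nth_mem)
    ultimately show ?thesis using False by auto
  qed
qed

lemma cells_conj:
  assumes s: "sorted_wrt (\<lambda>x y. y \<le> x) xs"
  shows "((c, k) \<in> cells (conj_part xs)) = (k < length xs \<and> c < xs ! k)"
proof -
  let ?M = "if xs = [] then 0 else Max (set xs)"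
  have len: "length (conj_part xs) = ?M" unfolding conj_part_def by simp
  have nth: "c < ?M \<Longrightarrow> conj_part xs ! c = length (filter (\<lambda>x. Suc c \<le> x) xs)"
    unfolding conj_part_def by (simp del: upt_Suc add: nth_map_upt)
  show ?thesis
  proof
    assume "(c, k) \<in> cells (conj_part xs)"
    then have "c < ?M" "k < conj_part xs ! c" unfolding cells_def len by auto
    then show "k < length xs \<and> c < xs ! k" using nth filt_len[OF s] by auto
  next
    assume a: "k < length xs \<and> c < xs ! k"
    then have "xs ! k \<le> Max (set xs)" "xs \<noteq> []" by auto
    then have "c < Max (set xs)" using a by linarith
    then have "c < ?M" using \<open>xs \<noteq> []\<close> by simp
    then show "(c, k) \<in> cells (conj_part xs)" using a nth filt_len[OF s] unfolding cells_def len by auto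
  qed
qed

lemma schur_eq_W:
  assumes s: "sorted_wrt (\<lambda>x y. y \<le> x) (tl lam)"
  shows "schur (conj_part (tl lam)) m (\<lambda>a. monom (1::rat) (a - 1)) = W lam m"
proof -
  let ?b = "conj_part (tl lam)"
  have cb: "((c, k) \<in> cells ?b) = ((Suc k, c) \<in> cellsW lam)" for c k
    unfolding cells_conj[OF s] cellsW_def by (auto simp: nth_tl)
  define phi where "phi U = (\<lambda>(c, k). U (Suc k, c))" for U :: "nat \<times> nat \<Rightarrow> nat"
  define psi where "psi T = (\<lambda>(i, j). if i = 0 then 0 else T (j, i - 1))" for T :: "nat \<times> nat \<Rightarrow> nat"
  have phi_in: "phi U \<in> ssyt ?b m" if U: "U \<in> RT lam m" for U
    unfolding ssyt_def
  proof (intro CollectI conjI allI impI ballI)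
    fix c assume "c \<in> cells ?b"
    then show "phi U c \<in> {1..m}" using U cb unfolding phi_def RT_def by (cases c) auto
  next
    fix c assume "c \<notin> cells ?b"
    then show "phi U c = 0" using U cb unfolding phi_def RT_def by (cases c) auto
  next
    fix i j assume "(i, Suc j) \<in> cells ?b"
    then have "(Suc (Suc j), i) \<in> cellsW lam" using cb by simp
    moreover have "1 \<le> Suc j" by simp
    ultimately have "U (Suc j, i) \<le> U (Suc (Suc j), i)" using U unfolding RT_def by blast
    then show "phi U (i, j) \<le> phi U (i, Suc j)" unfolding phi_def by simp
  next
    fix i j assume "(Suc i, j) \<in> cells ?b"
    then have "(Suc j, Suc i) \<in> cellsW lam" using cb by simp
    then have "U (Suc j, i) < U (Suc j, Suc i)" using U unfolding RT_def by blast
    then show "phi U (i, j) < phi U (Suc i, j)" unfolding phi_def by simp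
  qed
  have psi_in: "psi T \<in> RT lam m" if T: "T \<in> ssyt ?b m" for T
    unfolding RT_def
  proof (intro CollectI conjI allI impI ballI)
    fix c assume c: "c \<in> cellsW lam"
    obtain i j where cij: "c = (i, j)" by force
    then have "i \<noteq> 0" "(j, i - 1) \<in> cells ?b" using c cb[of j "i - 1"] unfolding cellsW_def by auto
    then show "psi T c \<in> {1..m}" using T cij unfolding psi_def ssyt_def by auto
  next
    fix c assume c: "c \<notin> cellsW lam"
    obtain i j where cij: "c = (i, j)" by force
    show "psi T c = 0"
    proof (cases "i = 0")
      case True then show ?thesis using cij unfolding psi_def by simp
    next
      case False
      then have "(j, i - 1) \<notin> cells ?b" using c cij cb[of j "i - 1"] by simp
      then show ?thesis using T cij False unfolding psi_def ssyt_def by auto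
    qed
  next
    fix i j assume a: "(i, Suc j) \<in> cellsW lam"
    then have i0: "i \<noteq> 0" unfolding cellsW_def by auto
    then have "(Suc j, i - 1) \<in> cells ?b" using a cb[of "Suc j" "i - 1"] by simp
    then have "T (j, i - 1) < T (Suc j, i - 1)" using T unfolding ssyt_def by blast
    then show "psi T (i, j) < psi T (i, Suc j)" using i0 unfolding psi_def by simp
  next
    fix i j assume a: "(Suc i, j) \<in> cellsW lam" and i1: "1 \<le> i"
    then have "(j, Suc (i - 1)) \<in> cells ?b" using cb[of j i] by simp
    then have "T (j, i - 1) \<le> T (j, Suc (i - 1))" using T unfolding ssyt_def by blast
    then show "psi T (i, j) \<le> psi T (Suc i, j)" using i1 unfolding psi_def by simp
  qed
  have bij: "bij_betw phi (RT lam m) (ssyt ?b m)"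
  proof (rule bij_betw_byWitness[where f'=psi])
    show "\<forall>U\<in>RT lam m. psi (phi U) = U"
    proof
      fix U assume U: "U \<in> RT lam m"
      show "psi (phi U) = U"
      proof
        fix c :: "nat \<times> nat"
        obtain i j where cij: "c = (i, j)" by force
        show "psi (phi U) c = U c"
        proof (cases "i = 0")
          case True
          then have "c \<notin> cellsW lam" using cij unfolding cellsW_def by auto
          then show ?thesis using RT_zero[OF U] True cij unfolding psi_def by simp
        next
          case False then show ?thesis using cij unfolding psi_def phi_def by simp
        qed
      qed
    qed
    show "\<forall>T\<in>ssyt ?b m. phi (psi T) = T" unfolding phi_def psi_def by auto
    show "phi ` RT lam m \<subseteq> ssyt ?b m" using phi_in by auto
    show "psi ` ssyt ?b m \<subseteq> RT lam m" using psi_in by auto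
  qed
  have cbij: "bij_betw (\<lambda>(c, k). (Suc k, c)) (cells ?b) (cellsW lam)"
  proof (rule bij_betw_byWitness[where f'="\<lambda>(i, j). (j, i - 1)"])
    show "\<forall>a\<in>cells ?b. (\<lambda>(i, j). (j, i - 1)) ((\<lambda>(c, k). (Suc k, c)) a) = a" by auto
    show "\<forall>a'\<in>cellsW lam. (\<lambda>(c, k). (Suc k, c)) ((\<lambda>(i, j). (j, i - 1)) a') = a'"
      unfolding cellsW_def by auto
    show "(\<lambda>(c, k). (Suc k, c)) ` cells ?b \<subseteq> cellsW lam" using cb by auto
    show "(\<lambda>(i, j). (j, i - 1)) ` cellsW lam \<subseteq> cells ?b"
    proof
      fix x assume "x \<in> (\<lambda>(i, j). (j, i - 1)) ` cellsW lam"
      then obtain i j where "(i, j) \<in> cellsW lam" "x = (j, i - 1)" by auto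
      moreover then have "i = Suc (i - 1)" unfolding cellsW_def by auto
      ultimately show "x \<in> cells ?b" using cb[of j "i - 1"] by simp
    qed
  qed
  have "schur ?b m (\<lambda>a. monom (1::rat) (a - 1)) = (\<Sum>U\<in>RT lam m. \<Prod>c\<in>cells ?b. monom 1 (phi U c - 1))"
    unfolding schur_def using sum.reindex_bij_betw[OF bij, of "\<lambda>T. \<Prod>c\<in>cells ?b. monom (1::rat) (T c - 1)"]
    by simp
  also have "\<dots> = W lam m" unfolding W_def
  proof (intro sum.cong refl)
    fix U
    show "(\<Prod>c\<in>cells ?b. monom (1::rat) (phi U c - 1)) = (\<Prod>c\<in>cellsW lam. monom 1 (U c - 1))"
      using prod.reindex_bij_betw[OF cbij, of "\<lambda>c. monom (1::rat) (U c - 1)"]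
      unfolding phi_def by (simp add: case_prod_beta)
  qed
  finally show ?thesis .
qed

definition plike :: "nat list \<Rightarrow> bool" where
  "plike lam \<longleftrightarrow> (\<forall>i. Suc i < length lam \<longrightarrow> lam ! Suc i \<le> lam ! i)"

definition N0 :: "nat list \<Rightarrow> (nat \<times> nat \<Rightarrow> nat) \<Rightarrow> nat set" where
  "N0 lam T = T ` {c \<in> cells lam. fst c = 0}"

definition DS :: "nat list \<Rightarrow> (nat \<times> nat \<Rightarrow> nat) \<Rightarrow> nat set" where
  "DS lam T = {t. 1 \<le> t \<and> t < sum_list lam \<and> Suc t \<notin> N0 lam T}"

lemma plike_mono: "plike lam \<Longrightarrow> i \<le> j \<Longrightarrow> j < length lam \<Longrightarrow> lam ! j \<le> lam ! i"
proof (induction j)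
  case 0 then show ?case by simp
next
  case (Suc j)
  show ?case
  proof (cases "i = Suc j")
    case True then show ?thesis by simp
  next
    case False
    then have "lam ! j \<le> lam ! i" using Suc by simp
    moreover have "lam ! Suc j \<le> lam ! j" using Suc.prems unfolding plike_def by simp
    ultimately show ?thesis by simp
  qed
qed

lemma cells_up: "plike lam \<Longrightarrow> (i, j) \<in> cells lam \<Longrightarrow> i' \<le> i \<Longrightarrow> (i', j) \<in> cells lam"
  unfolding cells_def using plike_mono[of lam i' i] by fastforce

lemma cells_left: "(i, j) \<in> cells lam \<Longrightarrow> j' \<le> j \<Longrightarrow> (i, j') \<in> cells lam"
  unfolding cells_def by auto

lemma cells_Sigma: "cells lam = (SIGMA i:{..<length lam}. {..<lam ! i})"
  unfolding cells_def by auto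

lemma finite_cells: "finite (cells lam)" unfolding cells_Sigma by simp

lemma card_cells: "card (cells lam) = sum_list lam"
  unfolding cells_Sigma by (simp add: card_SigmaI sum_list_sum_nth atLeast0LessThan)

lemma syt_bij: "T \<in> syt lam \<Longrightarrow> bij_betw T (cells lam) {1..sum_list lam}"
  unfolding syt_def by auto
lemma syt_inj: "T \<in> syt lam \<Longrightarrow> inj_on T (cells lam)"
  using syt_bij bij_betw_imp_inj_on by blast
lemma syt_img: "T \<in> syt lam \<Longrightarrow> T ` cells lam = {1..sum_list lam}"
  using syt_bij bij_betw_imp_surj_on by blast
lemma syt_val: "T \<in> syt lam \<Longrightarrow> c \<in> cells lam \<Longrightarrow> T c \<in> {1..sum_list lam}"
  using syt_img by blast
lemma syt_zero: "T \<in> syt lam \<Longrightarrow> c \<notin> cells lam \<Longrightarrow> T c = 0"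
  unfolding syt_def by blast
lemma syt_row: "T \<in> syt lam \<Longrightarrow> (i, Suc j) \<in> cells lam \<Longrightarrow> T (i, j) < T (i, Suc j)"
  unfolding syt_def by auto
lemma syt_col: "T \<in> syt lam \<Longrightarrow> (Suc i, j) \<in> cells lam \<Longrightarrow> T (i, j) < T (Suc i, j)"
  unfolding syt_def by auto

lemma finite_syt: "finite (syt lam)"
proof -
  have "syt lam \<subseteq> {f. \<forall>x. (x \<in> cells lam \<longrightarrow> f x \<in> {1..sum_list lam}) \<and> (x \<notin> cells lam \<longrightarrow> f x = 0)}"
    using syt_val syt_zero by blast
  then show ?thesis by (rule finite_subset) (intro finite_set_of_finite_funs finite_cells; simp)
qed

lemma row_of_eq: "T \<in> syt lam \<Longrightarrow> c \<in> cells lam \<Longrightarrow> row_of lam T (T c) = fst c"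
proof -
  assume T: "T \<in> syt lam" and c: "c \<in> cells lam"
  have "(THE c'. c' \<in> cells lam \<and> T c' = T c) = c"
    using T c syt_inj[OF T] by (intro the_equality) (auto dest: inj_onD)
  then show ?thesis unfolding row_of_def by simp
qed

lemma row_mono: "T \<in> syt lam \<Longrightarrow> (i, j') \<in> cells lam \<Longrightarrow> j < j' \<Longrightarrow> T (i, j) < T (i, j')"
proof (induction j')
  case 0 then show ?case by simp
next
  case (Suc j')
  have c: "(i, j') \<in> cells lam" using Suc.prems cells_left by force
  have "T (i, j') < T (i, Suc j')" using syt_row Suc.prems by blast
  moreover have "j < j' \<Longrightarrow> T (i, j) < T (i, j')" using Suc c by blast
  ultimately show ?case using Suc.prems by (cases "j = j'") auto
qed

lemma row_mono_le: "T \<in> syt lam \<Longrightarrow> (i, j') \<in> cells lam \<Longrightarrow> j \<le> j' \<Longrightarrow> T (i, j) \<le> T (i, j')"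
  using row_mono[of T lam i j' j] by (cases "j = j'") auto

lemma T00:
  assumes pl: "plike lam" and T: "T \<in> syt lam" and ne: "lam \<noteq> []" and h: "0 < lam ! 0"
  shows "T (0, 0) = 1"
proof -
  have "sum_list lam \<ge> 1"
  proof -
    have "(0,0) \<in> cells lam" using ne h unfolding cells_def by auto
    then have "cells lam \<noteq> {}" by auto
    then have "card (cells lam) > 0" using finite_cells[of lam] by (simp add: card_gt_0_iff)
    then show ?thesis using card_cells[of lam] by simp
  qed
  then have "1 \<in> T ` cells lam" using syt_img[OF T] by auto
  then obtain i j where c: "(i, j) \<in> cells lam" "T (i, j) = 1" by auto
  have "i = 0"
  proof (rule ccontr)
    assume "i \<noteq> 0"
    then obtain i' where i': "i = Suc i'" by (cases i) auto
    have "(i', j) \<in> cells lam" using cells_up[OF pl c(1)] i' by simp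
    then have "T (i', j) \<ge> 1" using syt_val[OF T] by fastforce
    moreover have "T (i', j) < T (i, j)" using syt_col[OF T] c i' by blast
    ultimately show False using c by simp
  qed
  moreover have "j = 0"
  proof (rule ccontr)
    assume "j \<noteq> 0"
    have "(i, 0) \<in> cells lam" using cells_left c by blast
    then have "T (i, 0) \<ge> 1" using syt_val[OF T] by fastforce
    moreover have "T (i, 0) < T (i, j)" using row_mono[OF T c(1)] \<open>j \<noteq> 0\<close> by blast
    ultimately show False using c by simp
  qed
  ultimately show ?thesis using c by simp
qed

lemma descents_sub_DS: assumes T: "T \<in> syt lam" shows "descents lam T \<subseteq> DS lam T"
proof
  fix t assume t: "t \<in> descents lam T"
  show "t \<in> DS lam T"
  proof (rule ccontr)
    assume "t \<notin> DS lam T"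
    then have "Suc t \<in> N0 lam T" using t unfolding descents_def DS_def by auto
    then obtain c where "c \<in> cells lam" "fst c = 0" "T c = Suc t" unfolding N0_def by auto
    then have "row_of lam T (Suc t) = 0" using row_of_eq[OF T] by metis
    then show False using t unfolding descents_def by auto
  qed
qed

lemma finite_DS: "finite (DS lam T)" unfolding DS_def by auto

lemma card_DS:
  assumes pl: "plike lam" and T: "T \<in> syt lam" and ne: "lam \<noteq> []" and h: "0 < lam ! 0"
  shows "card (DS lam T) = sum_list lam - lam ! 0"
proof -
  let ?n = "sum_list lam"
  let ?Z = "{c \<in> cells lam. fst c = 0}"
  have Z: "?Z = (\<lambda>j. (0, j)) ` {..<lam ! 0}" using ne unfolding cells_def by auto
  have cZ: "card ?Z = lam ! 0" unfolding Z by (subst card_image) (auto simp: inj_on_def)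
  have cN0: "card (N0 lam T) = lam ! 0" unfolding N0_def
    using cZ syt_inj[OF T] by (subst card_image) (auto intro: inj_on_subset)
  have one: "1 \<in> N0 lam T" using T00[OF pl T ne h] ne h unfolding N0_def cells_def by force
  have N0sub: "N0 lam T \<subseteq> {1..?n}" unfolding N0_def using syt_val[OF T] by auto
  let ?J = "(\<lambda>t. t - 1) ` (N0 lam T - {1})"
  have DSeq: "DS lam T = {1..<?n} - ?J"
  proof
    show "DS lam T \<subseteq> {1..<?n} - ?J"
    proof
      fix t assume t: "t \<in> DS lam T"
      have "t \<notin> ?J"
      proof
        assume "t \<in> ?J"
        then obtain x where "x \<in> N0 lam T" "x \<noteq> 1" "t = x - 1" by auto
        moreover have "x \<ge> 1" using N0sub \<open>x \<in> N0 lam T\<close> by auto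
        ultimately have "Suc t = x" by simp
        with \<open>x \<in> N0 lam T\<close> have "Suc t \<in> N0 lam T" by simp
        then show False using t unfolding DS_def by auto
      qed
      then show "t \<in> {1..<?n} - ?J" using t unfolding DS_def by auto
    qed
    show "{1..<?n} - ?J \<subseteq> DS lam T"
    proof
      fix t assume t: "t \<in> {1..<?n} - ?J"
      have "Suc t \<notin> N0 lam T"
      proof
        assume "Suc t \<in> N0 lam T"
        moreover have "Suc t \<noteq> 1" using t by auto
        ultimately have "Suc t - 1 \<in> ?J" by blast
        then show False using t by simp
      qed
      then show "t \<in> DS lam T" using t unfolding DS_def by auto
    qed
  qed
  have Jsub: "?J \<subseteq> {1..<?n}"
  proof
    fix y assume "y \<in> ?J"
    then obtain x where "x \<in> N0 lam T" "x \<noteq> 1" "y = x - 1" by auto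
    then show "y \<in> {1..<?n}" using N0sub by force
  qed
  have cJ: "card ?J = lam ! 0 - 1"
  proof -
    have "inj_on (\<lambda>t. t - 1) (N0 lam T - {1})"
    proof (rule inj_onI)
      fix x y assume "x \<in> N0 lam T - {1}" "y \<in> N0 lam T - {1}" "x - 1 = y - 1"
      moreover then have "x \<ge> 1" "y \<ge> 1" using N0sub by auto
      ultimately show "x = y" by arith
    qed
    then have "card ?J = card (N0 lam T - {1})" by (rule card_image)
    also have "\<dots> = lam ! 0 - 1" using cN0 one N0sub by (simp add: card_Diff_singleton finite_subset)
    finally show ?thesis .
  qed
  have "card (DS lam T) = card {1..<?n} - card ?J" unfolding DSeq by (rule card_Diff_subset) (use Jsub finite_subset in auto)
  also have "\<dots> = (?n - 1) - (lam ! 0 - 1)" using cJ by simp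
  also have "\<dots> = ?n - lam ! 0"
  proof -
    have "card (N0 lam T) \<le> card {1..?n}" by (rule card_mono[OF finite_atLeastAtMost N0sub])
    then have "lam ! 0 \<le> ?n" using cN0 by simp
    then show ?thesis using h by simp
  qed
  finally show ?thesis .
qed

lemma maxdes_iff:
  assumes pl: "plike lam" and T: "T \<in> syt lam" and ne: "lam \<noteq> []"
  shows "(des lam T = sum_list lam - hd lam) = (DS lam T \<subseteq> descents lam T)"
proof (cases "lam ! 0 = 0")
  case True
  have "\<forall>i<length lam. lam ! i = 0"
  proof (intro allI impI)
    fix i assume "i < length lam"
    then show "lam ! i = 0" using plike_mono[OF pl, of 0 i] True by simp
  qed
  then have z: "sum_list lam = 0" by (simp add: sum_list_sum_nth)
  have "DS lam T = {}" "descents lam T = {}" unfolding DS_def descents_def z by auto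
  then show ?thesis unfolding des_def z using True ne by (simp add: hd_conv_nth)
next
  case False
  have cd: "card (DS lam T) = sum_list lam - hd lam" using card_DS[OF pl T ne] False ne by (simp add: hd_conv_nth)
  have sub: "descents lam T \<subseteq> DS lam T" by (rule descents_sub_DS[OF T])
  show ?thesis
  proof
    assume "des lam T = sum_list lam - hd lam"
    then have "card (descents lam T) = card (DS lam T)" using cd unfolding des_def by simp
    then have "descents lam T = DS lam T" using sub finite_DS by (intro card_subset_eq) auto
    then show "DS lam T \<subseteq> descents lam T" by simp
  next
    assume "DS lam T \<subseteq> descents lam T"
    then have "descents lam T = DS lam T" using sub by auto
    then show "des lam T = sum_list lam - hd lam" unfolding des_def using cd by simp
  qed
qed

lemma maxdes_descents:
  assumes pl: "plike lam" and T: "T \<in> syt lam" and ne: "lam \<noteq> []"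
    and md: "des lam T = sum_list lam - hd lam"
  shows "descents lam T = DS lam T"
  using maxdes_iff[OF pl T ne] md descents_sub_DS[OF T] by auto

definition rk :: "nat set \<Rightarrow> nat \<Rightarrow> nat" where
  "rk A i = card {i' \<in> A. i' < i}"

definition sv :: "nat list \<Rightarrow> (nat \<times> nat \<Rightarrow> nat) \<Rightarrow> nat" where
  "sv lam T = T (0, lam ! 0 - 1)"

definition RofT :: "nat list \<Rightarrow> (nat \<times> nat \<Rightarrow> nat) \<Rightarrow> nat set" where
  "RofT lam T = fst ` {c \<in> cells lam. sv lam T < T c}"

definition restr :: "nat list \<Rightarrow> nat set \<Rightarrow> (nat \<times> nat \<Rightarrow> nat) \<Rightarrow> (nat \<times> nat \<Rightarrow> nat)" where
  "restr lam R T = (\<lambda>c. if c \<in> cells (dec lam (insert 0 R)) then T c else 0)"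

definition ext :: "nat list \<Rightarrow> nat set \<Rightarrow> (nat \<times> nat \<Rightarrow> nat) \<Rightarrow> (nat \<times> nat \<Rightarrow> nat)" where
  "ext lam R T' = (\<lambda>c. if c \<in> cells (dec lam (insert 0 R)) then T' c
      else if c \<in> cells lam then Suc (sum_list (dec lam (insert 0 R))) + rk (insert 0 R) (fst c) else 0)"

definition V :: "nat list \<Rightarrow> nat set set" where
  "V lam = {R. R \<subseteq> {1..<length lam} \<and> (\<forall>i\<in>R. 0 < lam ! i) \<and> plike (dec lam (insert 0 R))}"

lemma cells_dec:
  assumes "A \<subseteq> {..<length lam}" "\<forall>i\<in>A. 0 < lam ! i"
  shows "cells (dec lam A) = cells lam - (\<lambda>i. (i, lam ! i - 1)) ` A"
  using assms unfolding cells_def by (auto split: if_splits)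

lemma last_cells:
  assumes "A \<subseteq> {..<length lam}" "\<forall>i\<in>A. 0 < lam ! i"
  shows "(\<lambda>i. (i, lam ! i - 1)) ` A \<subseteq> cells lam"
  using assms unfolding cells_def by auto

lemma rk_0: "rk A 0 = 0" unfolding rk_def by simp

lemma rk_less: "finite A \<Longrightarrow> i \<in> A \<Longrightarrow> j \<in> A \<Longrightarrow> i < j \<Longrightarrow> rk A i < rk A j"
  unfolding rk_def by (rule psubset_card_mono) auto

lemma rk_le: "finite A \<Longrightarrow> i \<le> j \<Longrightarrow> rk A i \<le> rk A j"
  unfolding rk_def by (rule card_mono) auto

lemma rk_less_iff: "finite A \<Longrightarrow> i \<in> A \<Longrightarrow> j \<in> A \<Longrightarrow> (rk A i < rk A j) = (i < j)"
  using rk_less[of A i j] rk_le[of A j i] by (cases "i < j") auto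

lemma rk_inj: "finite A \<Longrightarrow> inj_on (rk A) A"
proof (rule inj_onI)
  fix i j assume "finite A" "i \<in> A" "j \<in> A" "rk A i = rk A j"
  then show "i = j" using rk_less[of A i j] rk_less[of A j i] by (cases i j rule: linorder_cases) auto
qed

lemma rk_lt: "finite A \<Longrightarrow> i \<in> A \<Longrightarrow> rk A i < card A"
  unfolding rk_def by (rule psubset_card_mono) auto

lemma rk_img: "finite A \<Longrightarrow> rk A ` A = {..<card A}"
proof -
  assume f: "finite A"
  have sub: "rk A ` A \<subseteq> {..<card A}" using rk_lt[OF f] by auto
  have "card (rk A ` A) = card A" using rk_inj[OF f] by (rule card_image)
  then show ?thesis using sub by (intro card_subset_eq) auto
qed

lemma rk_pos: "0 \<in> A \<Longrightarrow> finite A \<Longrightarrow> 0 < i \<Longrightarrow> 0 < rk A i"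
  unfolding rk_def by (subst card_gt_0_iff) auto

context
  fixes lam :: "nat list" and T :: "nat \<times> nat \<Rightarrow> nat" and m :: nat
  assumes pl: "plike lam" and ne: "lam \<noteq> []" and h0: "lam ! 0 = Suc m"
    and T: "T \<in> syt lam" and md: "des lam T = sum_list lam - hd lam"
begin

lemma r_c0: "(0, m) \<in> cells lam" using ne h0 unfolding cells_def by auto

lemma r_s: "sv lam T = T (0, m)" unfolding sv_def h0 by simp

lemma r_s_range: "1 \<le> sv lam T" "sv lam T \<le> sum_list lam"
  using syt_val[OF T r_c0] r_s by auto

lemma r_N0_le: "x \<in> N0 lam T \<Longrightarrow> x \<le> sv lam T"
proof -
  assume "x \<in> N0 lam T"
  then obtain j where "(0, j) \<in> cells lam" "x = T (0, j)" unfolding N0_def by force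
  moreover then have "j \<le> m" using h0 unfolding cells_def by auto
  ultimately show ?thesis using row_mono_le[OF T r_c0] r_s by simp
qed

lemma r_s_N0: "sv lam T \<in> N0 lam T" using r_c0 r_s unfolding N0_def by force

lemma r_desc: "descents lam T = DS lam T" by (rule maxdes_descents[OF pl T ne md])

lemma r_step: "sv lam T \<le> t \<Longrightarrow> t < sum_list lam \<Longrightarrow> row_of lam T t < row_of lam T (Suc t)"
proof -
  assume a: "sv lam T \<le> t" "t < sum_list lam"
  have "Suc t \<notin> N0 lam T" using r_N0_le a by fastforce
  then have "t \<in> DS lam T" using a r_s_range unfolding DS_def by auto
  then show ?thesis using r_desc unfolding descents_def by auto
qed

lemma r_chain: "sv lam T \<le> t \<Longrightarrow> t < t' \<Longrightarrow> t' \<le> sum_list lam \<Longrightarrow> row_of lam T t < row_of lam T t'"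
proof (induction t')
  case 0 then show ?case by simp
next
  case (Suc t')
  show ?case
  proof (cases "t = t'")
    case True then show ?thesis using r_step Suc.prems by simp
  next
    case False
    then have "row_of lam T t < row_of lam T t'" using Suc by simp
    moreover have "row_of lam T t' < row_of lam T (Suc t')" using r_step Suc.prems False by simp
    ultimately show ?thesis by simp
  qed
qed

lemma r_rows: "c \<in> cells lam \<Longrightarrow> c' \<in> cells lam \<Longrightarrow> sv lam T \<le> T c \<Longrightarrow> T c < T c' \<Longrightarrow> fst c < fst c'"
proof -
  assume a: "c \<in> cells lam" "c' \<in> cells lam" "sv lam T \<le> T c" "T c < T c'"
  have "T c' \<le> sum_list lam" using syt_val[OF T a(2)] by simp
  then have "row_of lam T (T c) < row_of lam T (T c')" using r_chain a by blast
  then show ?thesis using row_of_eq[OF T a(1)] row_of_eq[OF T a(2)] by simp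
qed

lemma r_last:
  assumes c: "c \<in> cells lam" and v: "sv lam T < T c"
  shows "fst c \<noteq> 0" "snd c = lam ! fst c - 1"
proof -
  show "fst c \<noteq> 0"
  proof
    assume "fst c = 0"
    then have "T c \<in> N0 lam T" using c unfolding N0_def by auto
    then show False using r_N0_le v by fastforce
  qed
  show "snd c = lam ! fst c - 1"
  proof (rule ccontr)
    assume a: "snd c \<noteq> lam ! fst c - 1"
    obtain i j where cij: "c = (i, j)" by force
    have c2: "(i, Suc j) \<in> cells lam" using c a cij unfolding cells_def by auto
    have "T (i, j) < T (i, Suc j)" using syt_row[OF T c2] .
    then have "fst c < fst (i, Suc j)" using r_rows[OF c c2] v cij by simp
    then show False using cij by simp
  qed
qed

abbreviation "RR \<equiv> RofT lam T"
abbreviation "AA \<equiv> insert 0 (RofT lam T)"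
abbreviation "lam' \<equiv> dec lam (insert 0 (RofT lam T))"

lemma r_R: "RR \<subseteq> {1..<length lam}" "\<forall>i\<in>RR. 0 < lam ! i" "0 \<notin> RR"
proof -
  show "RR \<subseteq> {1..<length lam}"
    using r_last unfolding RofT_def by (force simp: cells_def)
  show "\<forall>i\<in>RR. 0 < lam ! i" unfolding RofT_def cells_def by auto
  show "0 \<notin> RR" using r_last unfolding RofT_def by force
qed

lemma finite_RR: "finite RR" using r_R(1) finite_subset by blast

lemma r_A: "AA \<subseteq> {..<length lam}" "\<forall>i\<in>AA. 0 < lam ! i"
  using r_R ne h0 by auto

lemma r_Rem: "{c \<in> cells lam. sv lam T \<le> T c} = (\<lambda>i. (i, lam ! i - 1)) ` AA"
proof
  show "{c \<in> cells lam. sv lam T \<le> T c} \<subseteq> (\<lambda>i. (i, lam ! i - 1)) ` AA"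
  proof
    fix c assume "c \<in> {c \<in> cells lam. sv lam T \<le> T c}"
    then have c: "c \<in> cells lam" "sv lam T \<le> T c" by auto
    show "c \<in> (\<lambda>i. (i, lam ! i - 1)) ` AA"
    proof (cases "T c = sv lam T")
      case True
      then have "c = (0, m)" using syt_inj[OF T] c r_c0 r_s by (auto dest: inj_onD)
      then show ?thesis using h0 by force
    next
      case False
      then have "sv lam T < T c" using c by simp
      then have "fst c \<in> RR" "snd c = lam ! fst c - 1" using r_last c unfolding RofT_def by auto
      moreover have "c = (fst c, lam ! fst c - 1)" using \<open>snd c = lam ! fst c - 1\<close> by (cases c) simp
      ultimately show ?thesis by (intro rev_image_eqI[of "fst c"]) auto
    qed
  qed
  show "(\<lambda>i. (i, lam ! i - 1)) ` AA \<subseteq> {c \<in> cells lam. sv lam T \<le> T c}"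
  proof
    fix x assume "x \<in> (\<lambda>i. (i, lam ! i - 1)) ` AA"
    then obtain i where i: "i \<in> AA" "x = (i, lam ! i - 1)" by auto
    show "x \<in> {c \<in> cells lam. sv lam T \<le> T c}"
    proof (cases "i = 0")
      case True then show ?thesis using i r_c0 r_s h0 by simp
    next
      case False
      then have "i \<in> RR" using i by simp
      then obtain c where c: "c \<in> cells lam" "sv lam T < T c" "fst c = i" unfolding RofT_def by auto
      then have "c = x" using r_last[OF c(1,2)] i by (cases c) auto
      then show ?thesis using c by simp
    qed
  qed
qed

lemma r_cells': "cells lam' = {c \<in> cells lam. T c < sv lam T}"
proof -
  have "cells lam' = cells lam - (\<lambda>i. (i, lam ! i - 1)) ` AA" using cells_dec[OF r_A] .
  also have "\<dots> = cells lam - {c \<in> cells lam. sv lam T \<le> T c}" using r_Rem by simp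
  also have "\<dots> = {c \<in> cells lam. T c < sv lam T}" by auto
  finally show ?thesis .
qed

lemma r_img': "T ` cells lam' = {1..<sv lam T}"
proof -
  have "T ` cells lam' = {v \<in> T ` cells lam. v < sv lam T}" unfolding r_cells' by auto
  also have "\<dots> = {1..<sv lam T}" unfolding syt_img[OF T] using r_s_range by auto
  finally show ?thesis .
qed

lemma r_sum': "sum_list lam' = sv lam T - 1"
proof -
  have "sum_list lam' = card (cells lam')" by (simp add: card_cells)
  also have "\<dots> = card (T ` cells lam')"
    unfolding r_cells' by (intro card_image[symmetric] inj_on_subset[OF syt_inj[OF T]]) auto
  also have "\<dots> = sv lam T - 1" unfolding r_img' by simp
  finally show ?thesis .
qed

lemma r_cardR: "card RR = sum_list lam - sv lam T"
proof -
  let ?Rem = "{c \<in> cells lam. sv lam T \<le> T c}"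
  have "T ` ?Rem = {v \<in> T ` cells lam. sv lam T \<le> v}" by auto
  also have "\<dots> = {sv lam T..sum_list lam}" unfolding syt_img[OF T] using r_s_range by auto
  finally have "T ` ?Rem = {sv lam T..sum_list lam}" .
  moreover have "card (T ` ?Rem) = card ?Rem"
    by (intro card_image inj_on_subset[OF syt_inj[OF T]]) auto
  moreover have "card ?Rem = card AA" unfolding r_Rem by (intro card_image) (auto simp: inj_on_def)
  moreover have "card AA = Suc (card RR)" using finite_RR r_R(3) by simp
  ultimately show ?thesis using r_s_range by simp
qed

lemma r_syt': "restr lam RR T \<in> syt lam'"
proof -
  let ?T' = "restr lam RR T"
  have eq: "\<And>c. c \<in> cells lam' \<Longrightarrow> ?T' c = T c" unfolding restr_def by simp
  have inj: "inj_on T (cells lam')" by (rule inj_on_subset[OF syt_inj[OF T]]) (simp add: r_cells')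
  have bij: "bij_betw T (cells lam') {1..<sv lam T}" unfolding bij_betw_def using inj r_img' by simp
  have "{1..<sv lam T} = {1..sum_list lam'}" using r_sum' r_s_range by auto
  have bij0: "bij_betw ?T' (cells lam') {1..<sv lam T}"
    using bij_betw_cong[of "cells lam'" ?T' T, OF eq] bij by simp
  then have bij': "bij_betw ?T' (cells lam') {1..sum_list lam'}"
    using \<open>{1..<sv lam T} = {1..sum_list lam'}\<close> by simp
  show ?thesis unfolding syt_def
  proof (intro CollectI conjI allI impI bij')
    fix c assume "c \<notin> cells lam'" then show "?T' c = 0" unfolding restr_def by simp
  next
    fix i j assume a: "(i, Suc j) \<in> cells lam'"
    then have "(i, Suc j) \<in> cells lam" "T (i, Suc j) < sv lam T" unfolding r_cells' by auto
    moreover then have "(i, j) \<in> cells lam" using cells_left[of i "Suc j" lam j] by simp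
    moreover have "T (i, j) < T (i, Suc j)" using syt_row[OF T] calculation(1) .
    ultimately have "(i, j) \<in> cells lam'" unfolding r_cells' by auto
    then show "?T' (i, j) < ?T' (i, Suc j)" using a eq \<open>T (i, j) < T (i, Suc j)\<close> by simp
  next
    fix i j assume a: "(Suc i, j) \<in> cells lam'"
    then have "(Suc i, j) \<in> cells lam" "T (Suc i, j) < sv lam T" unfolding r_cells' by auto
    moreover then have "(i, j) \<in> cells lam" using cells_up[OF pl, of "Suc i" j i] by simp
    moreover have "T (i, j) < T (Suc i, j)" using syt_col[OF T] calculation(1) .
    ultimately have "(i, j) \<in> cells lam'" unfolding r_cells' by auto
    then show "?T' (i, j) < ?T' (Suc i, j)" using a eq \<open>T (i, j) < T (Suc i, j)\<close> by simp
  qed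
qed

lemma r_plike': "plike lam'"
  unfolding plike_def
proof (intro allI impI)
  fix i assume i: "Suc i < length lam'"
  show "lam' ! Suc i \<le> lam' ! i"
  proof (rule ccontr)
    assume "\<not> ?thesis"
    then have lt: "lam' ! i < lam' ! Suc i" by simp
    let ?L = "lam' ! i"
    have "(Suc i, ?L) \<in> cells lam'" using i lt unfolding cells_def by auto
    then have c1: "(Suc i, ?L) \<in> cells lam" "T (Suc i, ?L) < sv lam T" unfolding r_cells' by auto
    then have c2: "(i, ?L) \<in> cells lam" using cells_up[OF pl c1(1), of i] by simp
    have "T (i, ?L) < T (Suc i, ?L)" using syt_col[OF T c1(1)] .
    then have "(i, ?L) \<in> cells lam'" using c1 c2 unfolding r_cells' by auto
    then show False unfolding cells_def by simp
  qed
qed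

lemma r_V: "RR \<in> V lam" unfolding V_def using r_R r_plike' by auto

lemma r_ne': "lam' \<noteq> []"
proof
  assume "lam' = []"
  then have "length lam' = 0" by simp
  then have "length lam = 0" by simp
  then show False using ne by simp
qed

lemma r_hd': "hd lam' = m"
  using r_ne' h0 ne by (simp add: hd_conv_nth)

lemma r_transfer:
  assumes "1 \<le> v" "v < sv lam T"
  shows "row_of lam' (restr lam RR T) v = row_of lam T v"
proof -
  have "v \<in> T ` cells lam'" using r_img' assms by auto
  then obtain c where c: "c \<in> cells lam'" "T c = v" by auto
  have c1: "c \<in> cells lam" using c unfolding r_cells' by auto
  have "restr lam RR T c = v" using c unfolding restr_def by simp
  then have "row_of lam' (restr lam RR T) v = fst c" using row_of_eq[OF r_syt' c(1)] by simp
  moreover have "row_of lam T v = fst c" using row_of_eq[OF T c1] c by simp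
  ultimately show ?thesis by simp
qed

lemma r_N0': "x < sv lam T \<Longrightarrow> (x \<in> N0 lam' (restr lam RR T)) = (x \<in> N0 lam T)"
proof -
  assume x: "x < sv lam T"
  have "N0 lam' (restr lam RR T) = T ` {c \<in> cells lam'. fst c = 0}"
    unfolding N0_def restr_def by (rule image_cong) simp_all
  also have "\<dots> = {v \<in> N0 lam T. v < sv lam T}" unfolding r_cells' N0_def by auto
  finally show ?thesis using x by simp
qed

lemma r_DS_split: "DS lam T = DS lam' (restr lam RR T) \<union> {sv lam T..<sum_list lam}"
proof -
  let ?s = "sv lam T"
  show ?thesis
  proof (intro equalityI subsetI)
    fix t assume t: "t \<in> DS lam T"
    then have t1: "1 \<le> t" "t < sum_list lam" "Suc t \<notin> N0 lam T" unfolding DS_def by auto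
    show "t \<in> DS lam' (restr lam RR T) \<union> {?s..<sum_list lam}"
    proof (cases "?s \<le> t")
      case True then show ?thesis using t1 by auto
    next
      case False
      then have "Suc t \<noteq> ?s" using t1 r_s_N0 by auto
      then have "Suc t < ?s" using False by simp
      then have "t \<in> DS lam' (restr lam RR T)" using t1 r_N0'[of "Suc t"] r_sum' unfolding DS_def by auto
      then show ?thesis by simp
    qed
  next
    fix t assume t: "t \<in> DS lam' (restr lam RR T) \<union> {?s..<sum_list lam}"
    show "t \<in> DS lam T"
    proof (cases "t \<in> {?s..<sum_list lam}")
      case True
      then have "Suc t \<notin> N0 lam T" using r_N0_le by fastforce
      then show ?thesis using True r_s_range unfolding DS_def by auto
    next
      case False
      then have t1: "1 \<le> t" "t < ?s - 1" "Suc t \<notin> N0 lam' (restr lam RR T)"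
        using t r_sum' unfolding DS_def by auto
      then have "Suc t \<notin> N0 lam T" using r_N0'[of "Suc t"] by simp
      then show ?thesis using t1 r_s_range unfolding DS_def by auto
    qed
  qed
qed

lemma r_md': "des lam' (restr lam RR T) = sum_list lam' - hd lam'"
proof -
  have "DS lam' (restr lam RR T) \<subseteq> descents lam' (restr lam RR T)"
  proof
    fix t assume t: "t \<in> DS lam' (restr lam RR T)"
    then have t1: "1 \<le> t" "Suc t < sv lam T" using r_sum' unfolding DS_def by auto
    have "t \<in> DS lam T" using t r_DS_split by auto
    then have "row_of lam T t < row_of lam T (Suc t)" using r_desc unfolding descents_def by auto
    then show "t \<in> descents lam' (restr lam RR T)"
      using t r_transfer[of t] r_transfer[of "Suc t"] t1 unfolding descents_def DS_def by auto
  qed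
  then show ?thesis using maxdes_iff[OF r_plike' r_syt' r_ne'] by simp
qed

lemma r_maj: "maj lam T = maj lam' (restr lam RR T) + \<Sum>{sv lam T..<sum_list lam}"
proof -
  have d': "descents lam' (restr lam RR T) = DS lam' (restr lam RR T)"
    using maxdes_descents[OF r_plike' r_syt' r_ne' r_md'] .
  have disj: "DS lam' (restr lam RR T) \<inter> {sv lam T..<sum_list lam} = {}"
    using r_sum' unfolding DS_def by auto
  show ?thesis unfolding maj_def r_desc d' r_DS_split
    by (rule sum.union_disjoint[OF finite_DS _ disj]) simp
qed

lemma r_val:
  assumes c: "c \<in> cells lam" and v: "sv lam T \<le> T c"
  shows "T c = sv lam T + rk AA (fst c)"
proof -
  let ?s = "sv lam T"
  let ?Rem = "{c \<in> cells lam. ?s \<le> T c}"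
  let ?L = "{c' \<in> ?Rem. T c' < T c}"
  have Tc: "T c \<le> sum_list lam" using syt_val[OF T c] by simp
  have "T ` ?L = {v \<in> T ` cells lam. ?s \<le> v \<and> v < T c}" by auto
  also have "\<dots> = {?s..<T c}" unfolding syt_img[OF T] using Tc r_s_range by auto
  finally have "T ` ?L = {?s..<T c}" .
  moreover have "card (T ` ?L) = card ?L"
    by (intro card_image inj_on_subset[OF syt_inj[OF T]]) auto
  ultimately have cL: "card ?L = T c - ?s" by simp
  have L: "?L = {c' \<in> ?Rem. fst c' < fst c}"
  proof (intro equalityI subsetI)
    fix c' assume "c' \<in> ?L"
    then show "c' \<in> {c' \<in> ?Rem. fst c' < fst c}" using r_rows c by auto
  next
    fix c' assume a: "c' \<in> {c' \<in> ?Rem. fst c' < fst c}"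
    have "T c' < T c"
    proof (rule ccontr)
      assume "\<not> T c' < T c"
      then have "T c \<le> T c'" by simp
      moreover have "T c \<noteq> T c'"
      proof
        assume "T c = T c'"
        then have "c = c'" using syt_inj[OF T] a c by (auto dest: inj_onD)
        then show False using a by simp
      qed
      ultimately have "fst c < fst c'" using r_rows[OF c _ v] a by auto
      then show False using a by simp
    qed
    then show "c' \<in> ?L" using a by simp
  qed
  also have "\<dots> = (\<lambda>i. (i, lam ! i - 1)) ` {i \<in> AA. i < fst c}"
    unfolding r_Rem by auto
  finally have "card ?L = card {i \<in> AA. i < fst c}" by (simp add: card_image inj_on_def)
  then have "T c - ?s = rk AA (fst c)" unfolding rk_def using cL by simp
  then show ?thesis using v by simp
qed

lemma r_ext_restr: "ext lam RR (restr lam RR T) = T"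
proof
  fix c
  show "ext lam RR (restr lam RR T) c = T c"
  proof (cases "c \<in> cells lam'")
    case True then show ?thesis unfolding ext_def restr_def by simp
  next
    case False
    show ?thesis
    proof (cases "c \<in> cells lam")
      case True
      then have "sv lam T \<le> T c" using False unfolding r_cells' by auto
      then have "T c = sv lam T + rk AA (fst c)" using r_val True by blast
      then show ?thesis using True False r_sum' r_s_range unfolding ext_def by simp
    next
      case c: False
      then show ?thesis using False syt_zero[OF T c] unfolding ext_def by simp
    qed
  qed
qed

end

context
  fixes lam :: "nat list" and R :: "nat set" and T' :: "nat \<times> nat \<Rightarrow> nat" and m :: nat
  assumes pl: "plike lam" and ne: "lam \<noteq> []" and h0: "lam ! 0 = Suc m"
    and RV: "R \<in> V lam" and T': "T' \<in> syt (dec lam (insert 0 R))"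
    and md': "des (dec lam (insert 0 R)) T' = sum_list (dec lam (insert 0 R)) - hd (dec lam (insert 0 R))"
begin

abbreviation "A \<equiv> insert 0 R"
abbreviation "lm \<equiv> dec lam (insert 0 R)"
abbreviation "n' \<equiv> sum_list (dec lam (insert 0 R))"
abbreviation "Rem \<equiv> (\<lambda>i. (i, lam ! i - 1)) ` insert 0 R"
abbreviation "U \<equiv> ext lam R T'"

lemma e_R: "R \<subseteq> {1..<length lam}" "\<forall>i\<in>R. 0 < lam ! i" "plike lm" "0 \<notin> R" "finite A"
proof -
  show "R \<subseteq> {1..<length lam}" "\<forall>i\<in>R. 0 < lam ! i" "plike lm" using RV unfolding V_def by auto
  then show "0 \<notin> R" by auto
  have "finite R" by (rule finite_subset[OF \<open>R \<subseteq> {1..<length lam}\<close>]) simp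
  then show "finite A" by simp
qed

lemma e_A: "A \<subseteq> {..<length lam}" "\<forall>i\<in>A. 0 < lam ! i"
  using e_R ne h0 by auto

lemma e_cells': "cells lm = cells lam - Rem" by (rule cells_dec[OF e_A])
lemma e_Rem_sub: "Rem \<subseteq> cells lam" by (rule last_cells[OF e_A])

lemma e_Rem_iff: "((i, j) \<in> Rem) = (i \<in> A \<and> j = lam ! i - 1)" by auto

lemma e_cardRem: "card Rem = card A" by (rule card_image) (auto simp: inj_on_def)

lemma e_n: "sum_list lam = n' + card A"
proof -
  have "cells lam = cells lm \<union> Rem" using e_cells' e_Rem_sub by auto
  moreover have "cells lm \<inter> Rem = {}" using e_cells' by auto
  moreover have f2: "finite Rem" using e_R(5) by (rule finite_imageI)
  ultimately have "card (cells lam) = card (cells lm) + card Rem"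
    using card_Un_disjoint[OF finite_cells[of lm] f2] by simp
  then show ?thesis using e_cardRem by (simp add: card_cells)
qed

lemma e_val_old: "c \<in> cells lm \<Longrightarrow> U c = T' c" unfolding ext_def by simp

lemma e_val_new: "i \<in> A \<Longrightarrow> U (i, lam ! i - 1) = Suc n' + rk A i"
proof -
  assume i: "i \<in> A"
  then have "(i, lam ! i - 1) \<in> Rem" by auto
  then have "(i, lam ! i - 1) \<notin> cells lm" "(i, lam ! i - 1) \<in> cells lam" using e_cells' e_Rem_sub by auto
  then show ?thesis unfolding ext_def by simp
qed

lemma e_zero: "c \<notin> cells lam \<Longrightarrow> U c = 0"
  using e_cells' unfolding ext_def by auto

lemma e_T'val: "c \<in> cells lm \<Longrightarrow> T' c \<in> {1..n'}" using syt_val[OF T'] by blast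

lemma e_img_new: "U ` Rem = {Suc n'..sum_list lam}"
proof -
  have "U ` Rem = (\<lambda>i. Suc n' + rk A i) ` A" using e_val_new by (auto simp: image_image)
  also have "\<dots> = (\<lambda>k. Suc n' + k) ` (rk A ` A)" by (simp add: image_image)
  also have "\<dots> = (\<lambda>k. Suc n' + k) ` {..<card A}" using rk_img[OF e_R(5)] by simp
  also have "\<dots> = {Suc n'..<Suc n' + card A}"
  proof (intro equalityI subsetI)
    fix x assume "x \<in> (\<lambda>k. Suc n' + k) ` {..<card A}"
    then show "x \<in> {Suc n'..<Suc n' + card A}" by auto
  next
    fix x assume x: "x \<in> {Suc n'..<Suc n' + card A}"
    then have "x = Suc n' + (x - Suc n')" "x - Suc n' \<in> {..<card A}" by auto
    then show "x \<in> (\<lambda>k. Suc n' + k) ` {..<card A}" by (rule rev_image_eqI[rotated])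
  qed
  also have "\<dots> = {Suc n'..sum_list lam}" using e_n by auto
  finally show ?thesis .
qed

lemma e_inj_new: "inj_on U Rem"
proof (rule inj_onI)
  fix x y assume x: "x \<in> Rem" and y: "y \<in> Rem" and eq: "U x = U y"
  obtain i where i: "i \<in> A" "x = (i, lam ! i - 1)" using x by auto
  obtain j where j: "j \<in> A" "y = (j, lam ! j - 1)" using y by auto
  have "rk A i = rk A j" using eq i j e_val_new by simp
  then have "i = j" using inj_onD[OF rk_inj[OF e_R(5)] _ i(1) j(1)] by simp
  then show "x = y" using i j by simp
qed

lemma e_syt: "U \<in> syt lam"
proof -
  have b1: "bij_betw U (cells lm) {1..n'}"
    using bij_betw_cong[of "cells lm" U T', OF e_val_old] syt_bij[OF T'] by simp
  have b2: "bij_betw U Rem {Suc n'..sum_list lam}" unfolding bij_betw_def using e_inj_new e_img_new by simp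
  have "bij_betw U (cells lm \<union> Rem) ({1..n'} \<union> {Suc n'..sum_list lam})"
    by (rule bij_betw_combine[OF b1 b2]) auto
  moreover have "cells lm \<union> Rem = cells lam" using e_cells' e_Rem_sub by auto
  moreover have "{1..n'} \<union> {Suc n'..sum_list lam} = {1..sum_list lam}" using e_n by auto
  ultimately have bij: "bij_betw U (cells lam) {1..sum_list lam}" by simp
  show ?thesis unfolding syt_def
  proof (intro CollectI conjI allI impI bij)
    fix c assume "c \<notin> cells lam" then show "U c = 0" by (rule e_zero)
  next
    fix i j assume a: "(i, Suc j) \<in> cells lam"
    show "U (i, j) < U (i, Suc j)"
    proof (cases "(i, Suc j) \<in> cells lm")
      case True
      then have "(i, j) \<in> cells lm" using cells_left[of i "Suc j" lm j] by simp
      then show ?thesis using True syt_row[OF T'] e_val_old by simp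
    next
      case False
      then have r: "(i, Suc j) \<in> Rem" using a e_cells' by auto
      then have iA: "i \<in> A" "Suc j = lam ! i - 1" using e_Rem_iff by blast+
      then have "(i, j) \<in> cells lm" using a e_A(1) unfolding cells_def by auto
      then have "U (i, j) \<le> n'" using e_val_old e_T'val by fastforce
      moreover have "U (i, Suc j) = Suc n' + rk A i" using e_val_new[OF iA(1)] iA(2) by simp
      ultimately show ?thesis by simp
    qed
  next
    fix i j assume a: "(Suc i, j) \<in> cells lam"
    show "U (i, j) < U (Suc i, j)"
    proof (cases "(Suc i, j) \<in> cells lm")
      case True
      then have "(i, j) \<in> cells lm" using cells_up[OF e_R(3) True, of i] by simp
      then show ?thesis using True syt_col[OF T'] e_val_old by simp
    next
      case False
      then have r: "(Suc i, j) \<in> Rem" using a e_cells' by auto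
      then have iA: "Suc i \<in> A" "j = lam ! Suc i - 1" using e_Rem_iff by blast+
      have c: "(i, j) \<in> cells lam" using cells_up[OF pl a, of i] by simp
      have new: "U (Suc i, j) = Suc n' + rk A (Suc i)" using e_val_new[OF iA(1)] iA(2) by simp
      show ?thesis
      proof (cases "(i, j) \<in> cells lm")
        case True
        then have "U (i, j) \<le> n'" using e_val_old e_T'val by fastforce
        then show ?thesis using new by simp
      next
        case False
        then have "(i, j) \<in> Rem" using c e_cells' by auto
        then have iA': "i \<in> A" "j = lam ! i - 1" using e_Rem_iff by blast+
        have "U (i, j) = Suc n' + rk A i" using e_val_new[OF iA'(1)] iA'(2) by simp
        moreover have "rk A i < rk A (Suc i)" using rk_less[OF e_R(5) iA'(1) iA(1)] by simp
        ultimately show ?thesis using new by simp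
      qed
    qed
  qed
qed

lemma e_U0: "U (0, m) = Suc n'"
  using e_val_new[of 0] h0 rk_0 by simp

lemma e_N0: "N0 lam U = N0 lm T' \<union> {Suc n'}"
proof -
  have Z: "{c \<in> cells lam. fst c = 0} = {c \<in> cells lm. fst c = 0} \<union> {(0, m)}"
    using ne h0 unfolding cells_def by auto
  have "N0 lam U = U ` {c \<in> cells lm. fst c = 0} \<union> {U (0, m)}" unfolding N0_def Z by simp
  also have "U ` {c \<in> cells lm. fst c = 0} = N0 lm T'" unfolding N0_def
    using e_val_old by (intro image_cong) auto
  finally show ?thesis using e_U0 by simp
qed

lemma e_row_old: "1 \<le> v \<Longrightarrow> v \<le> n' \<Longrightarrow> row_of lam U v = row_of lm T' v"
proof -
  assume v: "1 \<le> v" "v \<le> n'"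
  then have "v \<in> T' ` cells lm" using syt_img[OF T'] by auto
  then obtain c where c: "c \<in> cells lm" "T' c = v" by auto
  then have "c \<in> cells lam" using e_cells' by auto
  then have "row_of lam U v = fst c" using row_of_eq[OF e_syt] e_val_old c by fastforce
  moreover have "row_of lm T' v = fst c" using row_of_eq[OF T' c(1)] c by simp
  ultimately show ?thesis by simp
qed

lemma e_row_new: "i \<in> A \<Longrightarrow> row_of lam U (Suc n' + rk A i) = i"
proof -
  assume i: "i \<in> A"
  then have "(i, lam ! i - 1) \<in> cells lam" using e_Rem_sub by auto
  then show ?thesis using row_of_eq[OF e_syt] e_val_new[OF i] by fastforce
qed

lemma e_md: "des lam U = sum_list lam - hd lam"
proof -
  have desc': "descents lm T' = DS lm T'"
  proof -
    have "lm \<noteq> []"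
    proof
      assume "lm = []"
      then have "length lm = 0" by simp
      then show False using ne by simp
    qed
    then show ?thesis using maxdes_descents[OF e_R(3) T' _ md'] by simp
  qed
  have "DS lam U \<subseteq> descents lam U"
  proof
    fix t assume t: "t \<in> DS lam U"
    then have t1: "1 \<le> t" "t < sum_list lam" "Suc t \<notin> N0 lam U" unfolding DS_def by auto
    then have nN: "Suc t \<noteq> Suc n'" "Suc t \<notin> N0 lm T'" using e_N0 by auto
    show "t \<in> descents lam U"
    proof (cases "Suc t \<le> n'")
      case True
      then have "t \<in> DS lm T'" using t1 nN unfolding DS_def by auto
      then have "row_of lm T' t < row_of lm T' (Suc t)" using desc' unfolding descents_def by auto
      then show ?thesis using e_row_old[of t] e_row_old[of "Suc t"] True t1 unfolding descents_def by auto
    next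
      case False
      then have "Suc n' \<le> t" using nN by simp
      then obtain k where k: "t = Suc n' + k" by (metis le_add_diff_inverse)
      have "Suc k < card A" using t1(2) k e_n by simp
      then have "k \<in> rk A ` A" "Suc k \<in> rk A ` A" using rk_img[OF e_R(5)] by auto
      then have "\<exists>i\<in>A. rk A i = k" "\<exists>i\<in>A. rk A i = Suc k" unfolding image_iff by metis+
      then obtain i i' where ii: "i \<in> A" "rk A i = k" "i' \<in> A" "rk A i' = Suc k" by blast
      then have "i < i'" using rk_less_iff[OF e_R(5) ii(1) ii(3)] by simp
      moreover have "row_of lam U t = i" using e_row_new[OF ii(1)] ii(2) k by simp
      moreover have "row_of lam U (Suc t) = i'" using e_row_new[OF ii(3)] ii(4) k by simp
      ultimately show ?thesis using t1 unfolding descents_def by simp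
    qed
  qed
  then show ?thesis using maxdes_iff[OF pl e_syt ne] by simp
qed

lemma e_sv: "sv lam U = Suc n'" unfolding sv_def using h0 e_U0 by simp

lemma e_RofT: "RofT lam U = R"
proof -
  have "{c \<in> cells lam. Suc n' < U c} = (\<lambda>i. (i, lam ! i - 1)) ` R"
  proof (intro equalityI subsetI)
    fix c assume c: "c \<in> {c \<in> cells lam. Suc n' < U c}"
    have "c \<notin> cells lm"
    proof
      assume "c \<in> cells lm"
      then have "U c \<le> n'" using e_val_old e_T'val by fastforce
      then show False using c by simp
    qed
    then have "c \<in> Rem" using c e_cells' by auto
    then obtain i where i: "i \<in> A" "c = (i, lam ! i - 1)" by auto
    have "i \<noteq> 0"
    proof
      assume "i = 0"
      then have "U c = Suc n'" using i e_U0 h0 by simp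
      then show False using c by simp
    qed
    then show "c \<in> (\<lambda>i. (i, lam ! i - 1)) ` R" using i by auto
  next
    fix c assume "c \<in> (\<lambda>i. (i, lam ! i - 1)) ` R"
    then obtain i where i: "i \<in> R" "c = (i, lam ! i - 1)" by auto
    then have "0 < i" using e_R(4) by (cases i) auto
    then have "0 < rk A i" using rk_pos[OF _ e_R(5)] by simp
    moreover have "c \<in> cells lam" using i e_Rem_sub by auto
    moreover have "U c = Suc n' + rk A i" using e_val_new[of i] i by simp
    ultimately show "c \<in> {c \<in> cells lam. Suc n' < U c}" by simp
  qed
  then show ?thesis unfolding RofT_def e_sv by (simp add: image_image)
qed

lemma e_restr: "restr lam R U = T'"
proof
  fix c show "restr lam R U c = T' c"
    unfolding restr_def using e_val_old syt_zero[OF T'] by auto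
qed

end

definition MD :: "nat list \<Rightarrow> (nat \<times> nat \<Rightarrow> nat) set" where
  "MD lam = {T \<in> syt lam. des lam T = sum_list lam - hd lam}"

lemma fpoly_MD: "fpoly lam (sum_list lam - hd lam) = (\<Sum>T\<in>MD lam. monom 1 (maj lam T))"
  unfolding fpoly_def MD_def by simp

lemma finite_MD: "finite (MD lam)" unfolding MD_def using finite_syt by simp

lemma finite_V: "finite (V lam)"
  unfolding V_def by (rule finite_subset[of _ "Pow {1..<length lam}"]) auto

lemma G_Suc:
  assumes pl: "plike lam" and ne: "lam \<noteq> []" and h0: "lam ! 0 = Suc m"
  shows "fpoly lam (sum_list lam - hd lam) = (\<Sum>R\<in>V lam.
     monom 1 (\<Sum>{sum_list lam - card R..<sum_list lam}) *
     fpoly (dec lam (insert 0 R)) (sum_list (dec lam (insert 0 R)) - hd (dec lam (insert 0 R))))"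
proof -
  have "fpoly lam (sum_list lam - hd lam) = (\<Sum>R\<in>V lam. \<Sum>T\<in>{T \<in> MD lam. RofT lam T = R}. monom 1 (maj lam T))"
    unfolding fpoly_MD
  proof (rule sum.group[symmetric])
    show "finite (MD lam)" by (rule finite_MD)
    show "finite (V lam)" by (rule finite_V)
    show "RofT lam ` MD lam \<subseteq> V lam" using r_V[OF pl ne h0] unfolding MD_def by auto
  qed
  also have "\<dots> = (\<Sum>R\<in>V lam.
     monom 1 (\<Sum>{sum_list lam - card R..<sum_list lam}) *
     fpoly (dec lam (insert 0 R)) (sum_list (dec lam (insert 0 R)) - hd (dec lam (insert 0 R))))"
  proof (intro sum.cong refl)
    fix R assume RV: "R \<in> V lam"
    let ?lm = "dec lam (insert 0 R)"
    let ?S = "\<Sum>{sum_list lam - card R..<sum_list lam}"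
    have grp: "T \<in> syt lam" "des lam T = sum_list lam - hd lam" "RofT lam T = R"
      if "T \<in> {T \<in> MD lam. RofT lam T = R}" for T using that unfolding MD_def by auto
    have bij: "bij_betw (restr lam R) {T \<in> MD lam. RofT lam T = R} (MD ?lm)"
    proof (rule bij_betw_byWitness[where f'="ext lam R"])
      show "\<forall>T\<in>{T \<in> MD lam. RofT lam T = R}. ext lam R (restr lam R T) = T"
        using r_ext_restr[OF pl ne h0] grp by blast
      show "\<forall>T'\<in>MD ?lm. restr lam R (ext lam R T') = T'"
        using e_restr[OF pl ne h0 RV] unfolding MD_def by blast
      show "restr lam R ` {T \<in> MD lam. RofT lam T = R} \<subseteq> MD ?lm"
      proof
        fix x assume "x \<in> restr lam R ` {T \<in> MD lam. RofT lam T = R}"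
        then obtain T where T: "T \<in> {T \<in> MD lam. RofT lam T = R}" "x = restr lam R T" by auto
        note g = grp[OF T(1)]
        show "x \<in> MD ?lm" unfolding MD_def
          using r_syt'[OF pl ne h0 g(1) g(2)] r_md'[OF pl ne h0 g(1) g(2)] g(3) T(2) by simp
      qed
      show "ext lam R ` MD ?lm \<subseteq> {T \<in> MD lam. RofT lam T = R}"
      proof
        fix x assume "x \<in> ext lam R ` MD ?lm"
        then obtain T' where T': "T' \<in> syt ?lm" "des ?lm T' = sum_list ?lm - hd ?lm" "x = ext lam R T'"
          unfolding MD_def by auto
        show "x \<in> {T \<in> MD lam. RofT lam T = R}" unfolding MD_def
          using e_syt[OF pl ne h0 RV T'(1,2)] e_md[OF pl ne h0 RV T'(1,2)] e_RofT[OF pl ne h0 RV T'(1,2)] T'(3)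
          by simp
      qed
    qed
    have majeq: "maj lam T = maj ?lm (restr lam R T) + ?S" if T: "T \<in> {T \<in> MD lam. RofT lam T = R}" for T
    proof -
      note g = grp[OF T]
      have "sv lam T = sum_list lam - card R"
        using r_cardR[OF pl ne h0 g(1) g(2)] r_s_range[OF pl ne h0 g(1) g(2)] g(3) by simp
      then show ?thesis using r_maj[OF pl ne h0 g(1) g(2)] g(3) by simp
    qed
    have "(\<Sum>T\<in>{T \<in> MD lam. RofT lam T = R}. monom (1::rat) (maj lam T)) =
        (\<Sum>T\<in>{T \<in> MD lam. RofT lam T = R}. monom 1 ?S * monom 1 (maj ?lm (restr lam R T)))"
      by (intro sum.cong refl) (simp add: majeq mult_monom add.commute)
    also have "\<dots> = monom 1 ?S * (\<Sum>T\<in>{T \<in> MD lam. RofT lam T = R}. monom 1 (maj ?lm (restr lam R T)))"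
      by (simp only: sum_distrib_left)
    also have "(\<Sum>T\<in>{T \<in> MD lam. RofT lam T = R}. monom (1::rat) (maj ?lm (restr lam R T))) =
        (\<Sum>T'\<in>MD ?lm. monom 1 (maj ?lm T'))"
      using sum.reindex_bij_betw[OF bij, of "\<lambda>T'. monom (1::rat) (maj ?lm T')"] by simp
    finally show "(\<Sum>T\<in>{T \<in> MD lam. RofT lam T = R}. monom 1 (maj lam T)) =
        monom 1 ?S * fpoly ?lm (sum_list ?lm - hd ?lm)"
      unfolding fpoly_MD .
  qed
  finally show ?thesis .
qed

lemma sum_dec:
  assumes XA: "XA \<subseteq> {..<length lam}" "\<forall>i\<in>XA. 0 < lam ! i" and fA: "finite XA"
  shows "sum_list lam = sum_list (dec lam XA) + card XA"
proof -
  let ?Rem = "(\<lambda>i. (i, lam ! i - 1)) ` XA"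
  have cd: "cells (dec lam XA) = cells lam - ?Rem" by (rule cells_dec[OF XA])
  have sub: "?Rem \<subseteq> cells lam" by (rule last_cells[OF XA])
  have f2: "finite ?Rem" using fA by (rule finite_imageI)
  have "cells lam = cells (dec lam XA) \<union> ?Rem" using cd sub by auto
  moreover have "cells (dec lam XA) \<inter> ?Rem = {}" using cd by auto
  ultimately have "card (cells lam) = card (cells (dec lam XA)) + card ?Rem"
    using card_Un_disjoint[OF finite_cells[of "dec lam XA"] f2] by simp
  moreover have "card ?Rem = card XA" by (rule card_image) (auto simp: inj_on_def)
  ultimately show ?thesis by (simp add: card_cells)
qed

lemma choose2_Suc: "(Suc x choose 2) = (x choose 2) + x"
  by (simp add: numeral_2_eq_2)

lemma arith_key: "\<Sum>{d + m + 1..<d + m + 1 + k} + (d + 1 choose 2) = (d + 1 + k choose 2) + m * k"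
proof (induction k)
  case 0 then show ?case by simp
next
  case (Suc k)
  have "\<Sum>{d + m + 1..<d + m + 1 + Suc k} = \<Sum>{d + m + 1..<d + m + 1 + k} + (d + m + 1 + k)"
    by simp
  moreover have "(d + 1 + Suc k choose 2) = (d + 1 + k choose 2) + (d + 1 + k)"
    using choose2_Suc[of "d + 1 + k"] by simp
  ultimately show ?case using Suc.IH by simp
qed

theorem G_main:
  "plike lam \<Longrightarrow> lam \<noteq> [] \<Longrightarrow> lam ! 0 = m \<Longrightarrow>
   fpoly lam (sum_list lam - hd lam) = monom 1 ((sum_list lam - hd lam + 1) choose 2) * W lam (hd lam)"
proof (induction m arbitrary: lam)
  case 0
  note pl = "0.prems"(1) and ne = "0.prems"(2) and h = "0.prems"(3)
  have allz: "\<forall>i<length lam. lam ! i = 0"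
  proof (intro allI impI)
    fix i assume "i < length lam"
    then show "lam ! i = 0" using plike_mono[OF pl, of 0 i] h by simp
  qed
  then have z: "sum_list lam = 0" by (simp add: sum_list_sum_nth)
  have hd0: "hd lam = 0" using ne h by (simp add: hd_conv_nth)
  have ce: "cells lam = {}" using allz unfolding cells_def by auto
  have cw: "cellsW lam = {}" using allz unfolding cellsW_def by auto
  have "syt lam = {\<lambda>_. 0}" unfolding syt_def ce z by (auto simp: bij_betw_def)
  moreover have "des lam (\<lambda>_. 0) = 0" "maj lam (\<lambda>_. 0) = 0" unfolding des_def maj_def descents_def z by auto
  ultimately have "{T \<in> syt lam. des lam T = 0} = {\<lambda>_. 0}" by auto
  then have "fpoly lam (sum_list lam - hd lam) = monom 1 (maj lam (\<lambda>_. 0))" unfolding fpoly_def z hd0 by simp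
  then have "fpoly lam (sum_list lam - hd lam) = 1"
    using \<open>maj lam (\<lambda>_. 0) = 0\<close> by (simp add: one_pCons monom_0)
  then have f1: "fpoly lam 0 = 1" unfolding z hd0 by simp
  show ?case unfolding z hd0 using f1 cw by (simp add: W_base one_pCons monom_0 binomial_eq_0)
next
  case (Suc m)
  note pl = Suc.prems(1) and ne = Suc.prems(2) and h = Suc.prems(3)
  let ?n = "sum_list lam"
  have hd: "hd lam = Suc m" using ne h by (simp add: hd_conv_nth)
  have pl1: "plike1 lam" using pl unfolding plike_def plike1_def by auto
  have step: "monom 1 (\<Sum>{?n - card R..<?n}) *
     fpoly (dec lam (insert 0 R)) (sum_list (dec lam (insert 0 R)) - hd (dec lam (insert 0 R)))
     = monom 1 ((?n - hd lam + 1) choose 2) * (monom 1 (m * card R) * W (dec lam R) m)"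
    if RV: "R \<in> V lam" for R
  proof -
    let ?lm = "dec lam (insert 0 R)"
    have Rs: "R \<subseteq> {1..<length lam}" "plike ?lm" using RV unfolding V_def by auto
    have ne': "?lm \<noteq> []"
    proof
      assume "?lm = []"
      then have "length ?lm = 0" by simp
      then show False using ne by simp
    qed
    have h': "?lm ! 0 = m" using ne h by simp
    have hd': "hd ?lm = m" using ne' h' by (simp add: hd_conv_nth)
    have IH: "fpoly ?lm (sum_list ?lm - hd ?lm) = monom 1 ((sum_list ?lm - hd ?lm + 1) choose 2) * W ?lm (hd ?lm)"
      using Suc.IH[OF Rs(2) ne' h'] .
    have Wc: "W ?lm m = W (dec lam R) m"
      by (rule W_cong) (auto simp: cellsW_def)
    have fR: "finite R" using Rs(1) finite_subset by blast
    have n_eq: "?n = sum_list ?lm + Suc (card R)"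
    proof -
      have "0 \<notin> R" using Rs(1) by auto
      then have "card (insert 0 R) = Suc (card R)" using fR by simp
      moreover have "?n = sum_list ?lm + card (insert 0 R)"
      proof -
        have "R \<subseteq> {..<length lam}" using Rs(1) by auto
        then have "insert 0 R \<subseteq> {..<length lam}" using ne by auto
        moreover have "\<forall>i\<in>insert 0 R. 0 < lam ! i" using RV h unfolding V_def by auto
        ultimately show ?thesis using sum_dec[of "insert 0 R" lam] fR by simp
      qed
      ultimately show ?thesis by simp
    qed
    have mle: "m \<le> sum_list ?lm"
    proof -
      have "?lm ! 0 \<in> set ?lm" using ne by (intro nth_mem) simp
      then show ?thesis using h' member_le_sum_list by fastforce
    qed
    define d where "d = sum_list ?lm - m"
    have nd: "?n = d + m + 1 + card R" using n_eq mle unfolding d_def by simp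
    have "\<Sum>{?n - card R..<?n} + (sum_list ?lm - hd ?lm + 1 choose 2) = (?n - hd lam + 1 choose 2) + m * card R"
      using arith_key[of d m "card R"] unfolding nd hd hd' d_def[symmetric] by (simp add: algebra_simps)
    then show ?thesis using IH Wc hd' by (simp add: mult_monom algebra_simps flip: mult.assoc)
  qed
  have "fpoly lam (?n - hd lam) = (\<Sum>R\<in>V lam. monom 1 (\<Sum>{?n - card R..<?n}) *
     fpoly (dec lam (insert 0 R)) (sum_list (dec lam (insert 0 R)) - hd (dec lam (insert 0 R))))"
    by (rule G_Suc[OF pl ne h])
  also have "\<dots> = (\<Sum>R\<in>V lam. monom 1 ((?n - hd lam + 1) choose 2) * (monom 1 (m * card R) * W (dec lam R) m))"
    using step by simp
  also have "\<dots> = (\<Sum>R\<in>Vp lam. monom 1 ((?n - hd lam + 1) choose 2) * (monom 1 (m * card R) * W (dec lam R) m))"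
  proof (rule sum.mono_neutral_left)
    show "finite (Vp lam)" by (rule finite_Vp)
    show "V lam \<subseteq> Vp lam"
    proof
      fix R assume "R \<in> V lam"
      then have R: "R \<subseteq> {1..<length lam}" "\<forall>i\<in>R. 0 < lam ! i" "plike (dec lam (insert 0 R))" unfolding V_def by auto
      have "plike1 (dec lam R)" unfolding plike1_def
      proof (intro allI impI)
        fix i assume i: "1 \<le> i" "Suc i < length (dec lam R)"
        have "dec lam (insert 0 R) ! Suc i \<le> dec lam (insert 0 R) ! i" using R(3) i unfolding plike_def by (simp del: nth_dec)
        then show "dec lam R ! Suc i \<le> dec lam R ! i" using i by simp
      qed
      then show "R \<in> Vp lam" using R unfolding Vp_def by auto
    qed
    show "\<forall>R\<in>Vp lam - V lam. monom 1 ((?n - hd lam + 1) choose 2) * (monom 1 (m * card R) * W (dec lam R) m) = 0"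
    proof
      fix R assume R: "R \<in> Vp lam - V lam"
      then have Rs: "R \<subseteq> {1..<length lam}" "\<forall>i\<in>R. 0 < lam ! i" "plike1 (dec lam R)" unfolding Vp_def by auto
      have np: "\<not> plike (dec lam (insert 0 R))" using R Rs unfolding V_def by auto
      then obtain i where i: "Suc i < length lam" "dec lam (insert 0 R) ! i < dec lam (insert 0 R) ! Suc i"
        unfolding plike_def by auto
      have "i = 0"
      proof (rule ccontr)
        assume "i \<noteq> 0"
        then have "dec lam R ! Suc i \<le> dec lam R ! i" using Rs(3) i(1) unfolding plike1_def by simp
        then show False using i \<open>i \<noteq> 0\<close> by simp
      qed
      have d0: "dec lam (insert 0 R) ! 0 = m" using ne h by simp
      then have "Suc 0 < length (dec lam R)" "m < dec lam R ! 1" using i h \<open>i = 0\<close> by auto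
      then have "W (dec lam R) m = 0" by (rule W_zero)
      then show "monom 1 ((?n - hd lam + 1) choose 2) * (monom 1 (m * card R) * W (dec lam R) m) = 0" by simp
    qed
  qed
  also have "\<dots> = monom 1 ((?n - hd lam + 1) choose 2) * W lam (Suc m)"
    using W_Suc[OF pl1, of m] by (simp add: sum_distrib_left)
  finally show ?case using hd by simp
qed

theorem mainTheorem6:
  fixes lam :: "nat list" and n :: nat
  assumes "is_partition lam" and "sum_list lam = n" and "lam \<noteq> []" and "hd lam \<ge> 1"
  shows "fpoly lam (n - hd lam) =
           monom 1 ((n - hd lam + 1) choose 2) *
           schur (conj_part (tl lam)) (hd lam) (\<lambda>a. monom (1::rat) (a - 1))
       \<and> fpoly lam (n - hd lam) =
           monom 1 ((n - hd lam + 1) choose 2) *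
           (\<Sum>p | p permutes {2..length lam}. of_int (sign p) *
              (\<Prod>i \<in> {2..length lam}.
                 qbinom (int (hd lam)) (int (lam ! (i - 1)) - int i + int (p i)) *
                 monom 1 (binom2 (int (lam ! (i - 1)) - int i + int (p i)))))"
proof -
  have sw: "sorted_wrt (\<lambda>x y. y \<le> x) lam"
    using assms(1) unfolding is_partition_def by (simp add: sorted_wrt_rev)
  have swt: "sorted_wrt (\<lambda>x y. y \<le> x) (tl lam)" using sw by (cases lam) auto
  have pl: "plike lam" unfolding plike_def
  proof (intro allI impI)
    fix i assume "Suc i < length lam"
    then show "lam ! Suc i \<le> lam ! i" using sorted_wrt_nth_less[OF sw, of i "Suc i"] by simp
  qed
  have pl1: "plike1 lam" using pl unfolding plike_def plike1_def by auto
  have G: "fpoly lam (n - hd lam) = monom 1 ((n - hd lam + 1) choose 2) * W lam (hd lam)"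
    using G_main[OF pl assms(3) refl] assms(2) by simp
  have S: "schur (conj_part (tl lam)) (hd lam) (\<lambda>a. monom (1::rat) (a - 1)) = W lam (hd lam)"
    by (rule schur_eq_W[OF swt])
  have Dq: "W lam (hd lam) = (\<Sum>p | p permutes {2..length lam}. of_int (sign p) *
              (\<Prod>i \<in> {2..length lam}.
                 qbinom (int (hd lam)) (int (lam ! (i - 1)) - int i + int (p i)) *
                 monom 1 (binom2 (int (lam ! (i - 1)) - int i + int (p i)))))"
    using W_eq_D[OF pl1, of "hd lam"] unfolding D_def E_def bvec_def by simp
  show ?thesis using G S Dq by simp
qed

end
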